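(* Let $d\ge1$, $s\in(0,1)$, $0<\lambda\le\Lambda$ and $M\ge0$. There exists $\delta>0$, depending only on $d,s,\lambda,\Lambda,M$, with the following property. Let $R>0$, let $K:\mathbb{R}^d\to\mathbb{R}$ be a measurable kernel satisfying $\lambda|y|^{-d-s}\le K(y)\le\Lambda|y|^{-d-s}$ and $K(y)=K(-y)$ for all $y\neq0$, and let $E\subset\mathbb{R}^d$ be a Borel set whose topological boundary $\partial E$ has Lebesgue measure zero and with $0\in\partial E$. If $H_{K,E}\le MR^{-s}$ in $B_{R/2}$ in the viscosity sense, then \[ |E\cap B_R|\ge\delta\,|B_R|. \]
   Context: $B_\rho(x)$ is the open ball of radius $\rho$ centred at $x$, $B_\rho=B_\rho(0)$, and $|F|$ denotes Lebesgue measure. Sets are not identified up to null sets, and $\partial E$ is the topological boundary. Put $\tilde\chi_E=\chi_{\mathbb{R}^d\setminus E}-\chi_E$. The nonlocal mean curvature of $E$ at $x\in\partial E$ is \[ H_{K,E}(x)=\lim_{\varepsilon\to0^+}\int_{\mathbb{R}^d\setminus B_\varepsilon(x)}\tilde\chi_E(y)K(x-y)\,dy, \] whenever the limit exists (possibly $+\infty$). At any $x\in\partial E$ admitting an exterior touching ball this limit exists in $(-\infty,+\infty]$. For an open set $\Omega$ and $C_0\in\mathbb{R}$, "$H_{K,E}\le C_0$ in $\Omega$ in the viscosity sense" means the following. Take any $x\in\partial E\cap\Omega$ for which there is an open ball $B\subset\mathbb{R}^d\setminus E$ with $x\in\partial B$. At every such $x$ one has $H_{K,E}(x)\le C_0$.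 *)

theory Defs
  imports "HOL-Analysis.Analysis"
begin

definition tchi :: "'a set \<Rightarrow> 'a \<Rightarrow> real" where
  "tchi E y = (if y \<in> E then -1 else 1)"

definition trunc_curv :: "('a::euclidean_space \<Rightarrow> real) \<Rightarrow> 'a set \<Rightarrow> 'a \<Rightarrow> real \<Rightarrow> real" where
  "trunc_curv K E x \<epsilon> =
     integral\<^sup>L lebesgue (\<lambda>y. indicator (UNIV - ball x \<epsilon>) y * (tchi E y * K (x - y)))"

text \<open>Nonlocal mean curvature: limit as eps -> 0+ in the extended reals (possibly +infinity).\<close>
definition nonlocal_curv :: "('a::euclidean_space \<Rightarrow> real) \<Rightarrow> 'a set \<Rightarrow> 'a \<Rightarrow> ereal" where
  "nonlocal_curv K E x = Lim (at_right 0) (\<lambda>\<epsilon>. ereal (trunc_curv K E x \<epsilon>))"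

definition ext_touching_ball :: "'a::euclidean_space set \<Rightarrow> 'a \<Rightarrow> bool" where
  "ext_touching_ball E x \<longleftrightarrow> (\<exists>c r. r > 0 \<and> ball c r \<subseteq> UNIV - E \<and> x \<in> frontier (ball c r))"

definition visc_curv_le :: "('a::euclidean_space \<Rightarrow> real) \<Rightarrow> 'a set \<Rightarrow> 'a set \<Rightarrow> real \<Rightarrow> bool" where
  "visc_curv_le K E \<Omega> C0 \<longleftrightarrow>
     (\<forall>x \<in> frontier E \<inter> \<Omega>. ext_touching_ball E x \<longrightarrow> nonlocal_curv K E x \<le> ereal C0)"

end

theory Submission
  imports Defs
begin

lemma dyadic_exists:
  fixes q :: real assumes "1 \<le> q"
  shows "\<exists>k::nat. 2^k \<le> q \<and> q < 2^(Suc k)"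
proof -
  obtain n :: nat where n: "q < 2^n"
    using real_arch_pow[of 2 q] by auto
  define k where "k = (LEAST n. q < 2^n)"
  have kq: "q < 2^k" unfolding k_def by (rule LeastI[of _ n]) (rule n)
  have kmin: "\<And>m. m < k \<Longrightarrow> \<not> q < 2^m" unfolding k_def using not_less_Least by blast
  show ?thesis
  proof (cases k)
    case 0 then show ?thesis using kq assms by simp
  next
    case (Suc j)
    then have "2^j \<le> q" using kmin[of j] by simp
    then show ?thesis using kq Suc by blast
  qed
qed

lemma nn_shell_sum:
  fixes S :: "nat \<Rightarrow> 'a::euclidean_space set" and f :: "'a \<Rightarrow> ennreal"
  assumes S: "\<And>k. S k \<in> sets lebesgue" and dj: "disjoint_family S"
    and f: "f \<in> borel_measurable lebesgue"
    and b: "\<And>k. (\<integral>\<^sup>+y. indicator (S k) y * f y \<partial>lebesgue) \<le> ennreal (b k)"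
    and sb: "summable b" and bnn: "\<And>k. 0 \<le> b k"
    and T: "T \<subseteq> (\<Union>k. S k)"
  shows "(\<integral>\<^sup>+y. indicator T y * f y \<partial>lebesgue) \<le> ennreal (\<Sum>k. b k)"
proof -
  have "(\<integral>\<^sup>+y. indicator T y * f y \<partial>lebesgue) \<le> (\<integral>\<^sup>+y. indicator (\<Union>k. S k) y * f y \<partial>lebesgue)"
    using T by (intro nn_integral_mono) (auto simp: indicator_def)
  also have "\<dots> = (\<integral>\<^sup>+y. (\<Sum>k. indicator (S k) y * f y) \<partial>lebesgue)"
    by (intro nn_integral_cong) (simp add: ennreal_suminf_multc suminf_indicator[OF dj])
  also have "\<dots> = (\<Sum>k. \<integral>\<^sup>+y. indicator (S k) y * f y \<partial>lebesgue)"
    using S f by (intro nn_integral_suminf) auto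
  also have "\<dots> \<le> (\<Sum>k. ennreal (b k))"
    using b by (intro suminf_le) auto
  also have "\<dots> = ennreal (\<Sum>k. b k)"
    using sb bnn by (simp add: suminf_ennreal2)
  finally show ?thesis .
qed

lemma nn_const_bound:
  fixes S :: "'a::euclidean_space set" and f :: "'a \<Rightarrow> ennreal"
  assumes S: "S \<in> sets lebesgue" and le: "\<And>y. y \<in> S \<Longrightarrow> f y \<le> c"
  shows "(\<integral>\<^sup>+y. indicator S y * f y \<partial>lebesgue) \<le> c * emeasure lebesgue S"
proof -
  have "(\<integral>\<^sup>+y. indicator S y * f y \<partial>lebesgue) \<le> (\<integral>\<^sup>+y. c * indicator S y \<partial>lebesgue)"
    using le by (intro nn_integral_mono) (auto simp: indicator_def)
  also have "\<dots> = c * emeasure lebesgue S"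
    using S by (simp add: nn_integral_cmult_indicator)
  finally show ?thesis .
qed

lemma emeasure_ball_eq:
  "emeasure lebesgue (ball (c::'a::euclidean_space) r) = ennreal (unit_ball_vol (DIM('a)) * r ^ DIM('a))"
  if "0 \<le> r"
  using that by (simp add: emeasure_ball)


lemma powr_alg1:
  fixes r s :: real and k d :: nat assumes "0 < r"
  shows "(r*2^k) powr (-(real d + s)) * (w * (r*2^(Suc k))^d) = w * 2^d * r powr (-s) * (2 powr (-s))^k"
proof -
  have a: "(r*2^k) powr (-(real d + s)) = r powr (-(real d + s)) * 2 powr (-(real d + s) * k)"
    using assms by (simp add: powr_mult powr_realpow[symmetric] powr_powr mult.commute)
  have b: "(r*2^(Suc k))^d = r powr (real d) * 2^d * 2 powr (real d * k)"
    using assms by (simp add: power_mult_distrib powr_realpow power_mult[symmetric] powr_powr[symmetric] mult.commute)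
  have c: "(2 powr (-s))^k = 2 powr (-s * k)"
    by (subst powr_realpow[symmetric]) (auto simp: powr_powr)
  have "r powr (-(real d + s)) * r powr (real d) = r powr (-s)"
    by (simp add: powr_add[symmetric])
  moreover have "2 powr (-(real d + s) * k) * 2 powr (real d * k) = (2::real) powr (-s * k)"
    by (simp add: powr_add[symmetric] algebra_simps)
  ultimately show ?thesis unfolding a b c
    by (simp add: algebra_simps)
qed


definition tailC :: "real \<Rightarrow> nat \<Rightarrow> real" where
  "tailC s n = unit_ball_vol n * 2^n / (1 - 2 powr (-s))"

lemma tailC_pos: "0 < s \<Longrightarrow> 0 < tailC s n"
  unfolding tailC_def by (auto intro!: divide_pos_pos simp: powr_minus_divide)

lemma borel_to_leb: "f \<in> borel_measurable borel \<Longrightarrow> f \<in> borel_measurable lebesgue"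
  by (rule measurable_completion) simp
lemma borel_sets_leb: "A \<in> sets borel \<Longrightarrow> A \<in> sets lebesgue"
  by (rule sets_completionI_sets) simp

lemma meas_phi[measurable]:
  "(\<lambda>y. ennreal (norm ((x::'a::euclidean_space) - y) powr q)) \<in> borel_measurable lebesgue"
  by (rule borel_to_leb) measurable

lemma tail_bound:
  fixes x :: "'a::euclidean_space"
  assumes s: "0 < s" and r: "0 < r"
  shows "(\<integral>\<^sup>+y. indicator {y. r \<le> norm (x - y)} y * ennreal (norm (x - y) powr (-(real DIM('a) + s))) \<partial>lebesgue)
          \<le> ennreal (tailC s DIM('a) * r powr (-s))"
proof -
  let ?d = "DIM('a)" let ?w = "unit_ball_vol (real ?d)"
  define S where "S k = {y. r*2^k \<le> norm (x - y) \<and> norm (x-y) < r*2^(Suc k)}" for k :: nat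
  define b where "b k = ?w * 2^?d * r powr (-s) * (2 powr (-s))^k" for k :: nat
  have Sm: "S k \<in> sets lebesgue" for k unfolding S_def by (rule borel_sets_leb) measurable
  have dj: "disjoint_family S"
  proof (unfold disjoint_family_on_def, intro ballI impI)
    fix m n :: nat assume "m \<noteq> n"
    have *: "S m \<inter> S n = {}" if "m < n" for m n :: nat
    proof -
      have "(2::real)^(Suc m) \<le> 2^n" using that by (intro power_increasing) auto
      then have "r*2^(Suc m) \<le> r*2^n" using r by simp
      then show ?thesis unfolding S_def by auto
    qed
    show "S m \<inter> S n = {}" using *[of m n] *[of n m] \<open>m \<noteq> n\<close> by (cases "m < n") auto
  qed
  have bound: "(\<integral>\<^sup>+y. indicator (S k) y * ennreal (norm (x - y) powr (-(real ?d + s))) \<partial>lebesgue) \<le> ennreal (b k)" for k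
  proof -
    have "(\<integral>\<^sup>+y. indicator (S k) y * ennreal (norm (x - y) powr (-(real ?d + s))) \<partial>lebesgue)
        \<le> ennreal ((r*2^k) powr (-(real ?d + s))) * emeasure lebesgue (S k)"
    proof (rule nn_const_bound[OF Sm])
      fix y assume "y \<in> S k"
      then have "r*2^k \<le> norm (x - y)" unfolding S_def by auto
      moreover have "0 < r*2^k" using r by simp
      ultimately show "ennreal (norm (x - y) powr (-(real ?d + s))) \<le> ennreal ((r*2^k) powr (-(real ?d + s)))"
        using s by (intro ennreal_leI powr_mono2') auto
    qed
    also have "\<dots> \<le> ennreal ((r*2^k) powr (-(real ?d + s))) * emeasure lebesgue (ball x (r*2^(Suc k)))"
      by (intro mult_left_mono emeasure_mono) (auto simp: S_def dist_norm)
    also have "\<dots> = ennreal ((r*2^k) powr (-(real ?d + s)) * (?w * (r*2^(Suc k))^?d))"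
      using r by (simp add: emeasure_ball ennreal_mult)
    also have "\<dots> = ennreal (b k)"
      by (simp only: b_def powr_alg1[OF r])
    finally show ?thesis .
  qed
  have q: "0 < 2 powr (-s)" "2 powr (-s) < (1::real)"
    using s by (auto simp: powr_minus_divide)
  have sb: "summable b" unfolding b_def
    using q by (intro summable_mult summable_geometric) auto
  have bnn: "0 \<le> b k" for k unfolding b_def using q by auto
  have cover: "{y. r \<le> norm (x - y)} \<subseteq> (\<Union>k. S k)"
  proof
    fix y assume "y \<in> {y. r \<le> norm (x - y)}"
    then have "1 \<le> norm (x - y) / r" using r by auto
    then obtain k :: nat where k: "2^k \<le> norm (x - y) / r" "norm (x - y) / r < 2^(Suc k)"
      using dyadic_exists by blast
    then have "y \<in> S k" using r unfolding S_def by (auto simp: field_simps)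
    then show "y \<in> (\<Union>k. S k)" by blast
  qed
  have "(\<integral>\<^sup>+y. indicator {y. r \<le> norm (x - y)} y * ennreal (norm (x - y) powr (-(real ?d + s))) \<partial>lebesgue)
      \<le> ennreal (\<Sum>k. b k)"
    by (rule nn_shell_sum[OF Sm dj _ bound sb bnn cover]) measurable
  also have "(\<Sum>k. b k) = tailC s ?d * r powr (-s)"
  proof -
    have "(\<Sum>k. b k) = ?w * 2^?d * r powr (-s) * (\<Sum>k. (2 powr (-s))^k)"
      unfolding b_def using q by (intro suminf_mult summable_geometric) auto
    also have "\<dots> = tailC s ?d * r powr (-s)"
      using q by (simp add: suminf_geometric tailC_def)
    finally show ?thesis .
  qed
  finally show ?thesis .
qed


lemma slab_measure:
  fixes e :: "'a::euclidean_space"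
  assumes e: "norm e = 1" and w: "0 < w" and wr: "6*w \<le> r"
  shows "emeasure lebesgue {v. norm v \<le> r \<and> \<bar>v \<bullet> e\<bar> \<le> w}
          \<le> ennreal (6 * 2^DIM('a) * unit_ball_vol (real DIM('a)) * r^DIM('a) * w / r)"
proof -
  let ?d = "DIM('a)" let ?w = "unit_ball_vol (real ?d)"
  define Sl where "Sl = {v::'a. norm v \<le> r \<and> \<bar>v \<bullet> e\<bar> \<le> w}"
  have r: "0 < r" using w wr by linarith
  have Slm: "Sl \<in> sets lebesgue" unfolding Sl_def by (rule borel_sets_leb) measurable
  define N where "N = nat \<lfloor>r/(3*w)\<rfloor>"
  have rw: "2 \<le> r/(3*w)" using w wr by (simp add: field_simps)
  have N1: "r/(3*w) - 1 \<le> real N" unfolding N_def using rw by linarith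
  have N2: "real N \<le> r/(3*w)" unfolding N_def using rw by linarith
  have Npos: "0 < real N" using N1 rw by linarith
  define V where "V j = (\<lambda>v. (3*w*real j) *\<^sub>R e + v) ` Sl" for j :: nat
  have Vm: "V j \<in> sets lebesgue" for j unfolding V_def by (rule lebesgue_sets_translation[OF Slm])
  have Veq: "emeasure lebesgue (V j) = emeasure lebesgue Sl" for j
  proof -
    have "V j = (\<lambda>v. 1 *\<^sub>R v + (3*w*real j) *\<^sub>R e) ` Sl" unfolding V_def
      by (auto simp: add.commute)
    then show ?thesis using emeasure_lebesgue_affine[of 1 "(3*w*real j) *\<^sub>R e" Sl] by simp
  qed
  have ee: "e \<bullet> e = 1" using e by (simp add: norm_eq_sqrt_inner)
  have dj: "disjoint_family_on V {..<N}"
  proof (unfold disjoint_family_on_def, intro ballI impI)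
    fix m n :: nat assume mn: "m \<noteq> n"
    have *: "V m \<inter> V n = {}" if "m < n" for m n :: nat
    proof (rule ccontr)
      assume "V m \<inter> V n \<noteq> {}"
      then obtain a b where ab: "a \<in> Sl" "b \<in> Sl" "(3*w*real m) *\<^sub>R e + a = (3*w*real n) *\<^sub>R e + b"
        unfolding V_def by auto
      then have "((3*w*real m) *\<^sub>R e + a) \<bullet> e = ((3*w*real n) *\<^sub>R e + b) \<bullet> e" by simp
      then have "3*w*real m + a \<bullet> e = 3*w*real n + b \<bullet> e" by (simp add: inner_add_left ee)
      moreover have "\<bar>a \<bullet> e\<bar> \<le> w" "\<bar>b \<bullet> e\<bar> \<le> w" using ab unfolding Sl_def by auto
      moreover have "3*w*real m + 3*w \<le> 3*w*real n"
      proof -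
        have "real m + 1 \<le> real n" using that by linarith
        then have "3*w*(real m + 1) \<le> 3*w*real n" using w by (intro mult_left_mono) auto
        then show ?thesis by (simp add: algebra_simps)
      qed
      ultimately show False using w by linarith
    qed
    show "V m \<inter> V n = {}" using *[of m n] *[of n m] mn by (cases "m < n") auto
  qed
  have sub: "(\<Union>j\<in>{..<N}. V j) \<subseteq> ball 0 (2*r)"
  proof
    fix y assume "y \<in> (\<Union>j\<in>{..<N}. V j)"
    then obtain j a where j: "j < N" "a \<in> Sl" "y = (3*w*real j) *\<^sub>R e + a" unfolding V_def by auto
    have "real j \<le> real N - 1" using j by linarith
    then have "3*w*real j \<le> 3*w*(real N - 1)" using w by simp
    also have "\<dots> < r" using N2 w by (simp add: field_simps)
    finally have jr: "3*w*real j < r" .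
    have "norm y \<le> norm ((3*w*real j) *\<^sub>R e) + norm a" using j by (metis norm_triangle_ineq)
    also have "\<dots> = 3*w*real j + norm a" using e w by simp
    also have "\<dots> < 2*r" using jr j(2) unfolding Sl_def by auto
    finally show "y \<in> ball 0 (2*r)" by simp
  qed
  have "(\<Sum>j\<in>{..<N}. emeasure lebesgue (V j)) = emeasure lebesgue (\<Union>j\<in>{..<N}. V j)"
    using dj Vm by (intro sum_emeasure) auto
  also have "\<dots> \<le> emeasure lebesgue (ball (0::'a) (2*r))" by (intro emeasure_mono sub) simp
  also have "\<dots> = ennreal (?w * (2*r)^?d)" using r by (simp add: emeasure_ball)
  finally have main: "of_nat N * emeasure lebesgue Sl \<le> ennreal (?w * (2*r)^?d)"
    by (simp add: Veq)
  have fin: "emeasure lebesgue Sl < \<infinity>"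
  proof -
    have "emeasure lebesgue Sl \<le> emeasure lebesgue (cball (0::'a) r)"
      by (intro emeasure_mono) (auto simp: Sl_def)
    also have "\<dots> < \<infinity>" using r by (simp add: emeasure_cball)
    finally show ?thesis .
  qed
  define m where "m = measure lebesgue Sl"
  have em: "emeasure lebesgue Sl = ennreal m" unfolding m_def using fin
    by (simp add: emeasure_eq_ennreal_measure)
  have m0: "0 \<le> m" unfolding m_def by simp
  have "ennreal (real N * m) \<le> ennreal (?w * (2*r)^?d)"
    using main em m0 by (simp add: ennreal_mult ennreal_of_nat_eq_real_of_nat)
  moreover have "0 \<le> ?w * (2*r)^?d" using r by simp
  ultimately have "real N * m \<le> ?w * (2*r)^?d" by (simp add: ennreal_le_iff)
  moreover have "r/(6*w) \<le> real N" using N1 rw w by (simp add: field_simps)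
  ultimately have "r/(6*w) * m \<le> ?w * (2*r)^?d" using m0 by (meson mult_right_mono order_trans)
  then have "m * r \<le> (?w * (2*r)^?d) * (6*w)" using w r
    by (simp add: divide_le_eq algebra_simps)
  then have "m \<le> (?w * (2*r)^?d) * (6*w) / r" using r by (simp add: le_divide_eq)
  also have "\<dots> = 6 * 2^?d * ?w * r^?d * w / r" by (simp add: power_mult_distrib)
  finally have "m \<le> 6 * 2^?d * ?w * r^?d * w / r" .
  then show ?thesis unfolding Sl_def[symmetric] em by (rule ennreal_leI)
qed


definition cuspC :: "real \<Rightarrow> nat \<Rightarrow> real" where
  "cuspC s n = 3 * unit_ball_vol n * 2^n * 2 powr (n + s) / (1 - 2 powr (s - 1))"

lemma cuspC_pos: "s < 1 \<Longrightarrow> 0 < cuspC s n"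
  unfolding cuspC_def
  by (intro divide_pos_pos mult_pos_pos) (auto simp: powr_less_one)

lemma alg_aux: "(X::real)*Y*(6*D*w*(Z/(2*\<rho>))) = 3*w*D*Y/\<rho>*(X*Z)"
  by (cases "\<rho> = 0") (simp_all add: field_simps)

lemma powr_alg2:
  fixes t s \<rho> w :: real and k d :: nat assumes t: "0 < t"
  shows "(t/2^k/2) powr (-(real d + s)) * (6 * 2^d * w * (t/2^k)^d * ((t/2^k)^2/(2*\<rho>)) / (t/2^k))
       = 3 * w * 2^d * 2 powr (real d + s) / \<rho> * (t powr (1 - s) * (2 powr (s - 1))^k)"
proof -
  define u where "u = t/2^k"
  have u: "0 < u" unfolding u_def using t by simp
  have a: "(u/2) powr (-(real d + s)) = u powr (-(real d + s)) * 2 powr (real d + s)"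
  proof -
    have "(u/2) powr (-(real d + s)) = u powr (-(real d + s)) / 2 powr (-(real d + s))"
      using u by (auto intro: powr_divide)
    also have "(2::real) powr (-(real d + s)) = inverse (2 powr (real d + s))"
      by (rule powr_minus)
    finally show ?thesis by (simp only: divide_inverse inverse_inverse_eq)
  qed
  have b: "u^d * (u^2/(2*\<rho>)) / u = u powr (real d + 1) / (2*\<rho>)"
  proof -
    have "u^d * (u^2/(2*\<rho>)) / u = u^(d+1) / (2*\<rho>)"
      using u by (simp add: power2_eq_square)
    also have "u^(d+1) = u powr (real d + 1)"
      using u powr_realpow[of u "d+1"] by (simp add: add.commute)
    finally show ?thesis .
  qed
  have c: "u powr (-(real d + s)) * u powr (real d + 1) = u powr (1 - s)"
    by (simp add: powr_add[symmetric])
  have d: "u powr (1 - s) = t powr (1 - s) * (2 powr (s - 1))^k"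
  proof -
    have "u powr (1 - s) = t powr (1 - s) / (2^k) powr (1 - s)"
      unfolding u_def using t by (simp add: powr_divide)
    also have "(2^k) powr (1 - s) = (2::real) powr (real k * (1 - s))"
      by (simp add: powr_realpow[symmetric] powr_powr)
    also have "((2::real) powr (s - 1))^k = 2 powr ((s - 1) * real k)"
      by (simp add: powr_realpow[symmetric] powr_powr)
    moreover have "(2::real) powr ((s - 1) * real k) = 1 / 2 powr (real k * (1 - s))"
      by (simp add: powr_minus_divide[symmetric] algebra_simps)
    ultimately show ?thesis by simp
  qed
  have e1: "u^d * (u^2/(2*\<rho>)) / u = u powr (real d + 1) / (2*\<rho>)" by (rule b)
  have "(u/2) powr (-(real d + s)) * (6 * 2^d * w * u^d * (u^2/(2*\<rho>)) / u)
      = (u powr (-(real d + s)) * 2 powr (real d + s)) * (6 * 2^d * w * (u^d * (u^2/(2*\<rho>)) / u))"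
    unfolding a by (simp add: mult.assoc times_divide_eq_right)
  also have "\<dots> = (u powr (-(real d + s)) * 2 powr (real d + s)) * (6 * 2^d * w * (u powr (real d + 1) / (2*\<rho>)))"
    unfolding e1 ..
  also have "\<dots> = 3 * w * 2^d * 2 powr (real d + s) / \<rho> * (u powr (-(real d + s)) * u powr (real d + 1))"
    by (rule alg_aux)
  also have "\<dots> = 3 * w * 2^d * 2 powr (real d + s) / \<rho> * u powr (1 - s)"
    unfolding c ..
  finally show ?thesis unfolding u_def[symmetric] d .
qed

lemma cusp_bound:
  fixes x e :: "'a::euclidean_space"
  assumes e: "norm e = 1" and s: "0 < s" "s < 1" and rho: "0 < \<rho>" and t: "0 < t" "3*t \<le> \<rho>"
  shows "(\<integral>\<^sup>+y. indicator {y. \<bar>(y - x) \<bullet> e\<bar> \<le> (norm (y - x))^2/(2*\<rho>) \<and> 0 < norm (y - x) \<and> norm (y - x) < t} y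
            * ennreal (norm (x - y) powr (-(real DIM('a) + s))) \<partial>lebesgue)
         \<le> ennreal (cuspC s DIM('a) * t powr (1 - s) / \<rho>)"
proof -
  let ?d = "DIM('a)" let ?w = "unit_ball_vol (real ?d)"
  define T where "T k = {y. \<bar>(y - x) \<bullet> e\<bar> \<le> (norm (y - x))^2/(2*\<rho>) \<and> t/2^k/2 < norm (y - x) \<and> norm (y - x) \<le> t/2^k}" for k :: nat
  define q where "q = (2::real) powr (s - 1)"
  define b where "b k = 3 * ?w * 2^?d * 2 powr (real ?d + s) / \<rho> * (t powr (1 - s) * q^k)" for k :: nat
  have Tm: "T k \<in> sets lebesgue" for k unfolding T_def by (rule borel_sets_leb) measurable
  have dj: "disjoint_family T"
  proof (unfold disjoint_family_on_def, intro ballI impI)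
    fix m n :: nat assume "m \<noteq> n"
    have *: "T m \<inter> T n = {}" if "m < n" for m n :: nat
    proof -
      have "(2::real)^(Suc m) \<le> 2^n" using that by (intro power_increasing) auto
      then have "t/2^n \<le> t/2^(Suc m)" using t by (intro divide_left_mono) auto
      then have "t/2^n \<le> t/2^m/2" by simp
      then show ?thesis unfolding T_def by auto
    qed
    show "T m \<inter> T n = {}" using *[of m n] *[of n m] \<open>m \<noteq> n\<close> by (cases "m < n") auto
  qed
  have bound: "(\<integral>\<^sup>+y. indicator (T k) y * ennreal (norm (x - y) powr (-(real ?d + s))) \<partial>lebesgue) \<le> ennreal (b k)" for k
  proof -
    define r where "r = t/2^k"
    define w where "w = r^2/(2*\<rho>)"
    have r: "0 < r" "r \<le> t" unfolding r_def using t by (auto simp: divide_le_eq)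
    have w: "0 < w" "6*w \<le> r"
    proof -
      show "0 < w" unfolding w_def using r rho by simp
      have "6*w = r * (3*r/\<rho>)" unfolding w_def using rho by (simp add: power2_eq_square field_simps)
      also have "\<dots> \<le> r * 1" using r t rho by (intro mult_left_mono) (auto simp: divide_le_eq)
      finally show "6*w \<le> r" by simp
    qed
    define Sl where "Sl = {v::'a. norm v \<le> r \<and> \<bar>v \<bullet> e\<bar> \<le> w}"
    have sub: "T k \<subseteq> (\<lambda>v. 1 *\<^sub>R v + x) ` Sl"
    proof
      fix y assume y: "y \<in> T k"
      have "norm (y - x) \<le> r" using y unfolding T_def r_def by auto
      moreover have "(norm (y - x))^2/(2*\<rho>) \<le> w" unfolding w_def using rho \<open>norm (y - x) \<le> r\<close>
        by (intro divide_right_mono power_mono) auto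
      ultimately have "y - x \<in> Sl" using y unfolding T_def Sl_def by auto
      then show "y \<in> (\<lambda>v. 1 *\<^sub>R v + x) ` Sl" by (intro image_eqI[of _ _ "y - x"]) auto
    qed
    have "(\<integral>\<^sup>+y. indicator (T k) y * ennreal (norm (x - y) powr (-(real ?d + s))) \<partial>lebesgue)
        \<le> ennreal ((r/2) powr (-(real ?d + s))) * emeasure lebesgue (T k)"
    proof (rule nn_const_bound[OF Tm])
      fix y assume "y \<in> T k"
      then have "r/2 \<le> norm (x - y)" unfolding T_def r_def by (auto simp: norm_minus_commute)
      then show "ennreal (norm (x - y) powr (-(real ?d + s))) \<le> ennreal ((r/2) powr (-(real ?d + s)))"
        using s r by (intro ennreal_leI powr_mono2') auto
    qed
    also have "\<dots> \<le> ennreal ((r/2) powr (-(real ?d + s))) * emeasure lebesgue ((\<lambda>v. 1 *\<^sub>R v + x) ` Sl)"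
    proof -
      have Slm: "Sl \<in> sets lebesgue" unfolding Sl_def by (rule borel_sets_leb) measurable
      have "(\<lambda>v. 1 *\<^sub>R v + x) ` Sl = (\<lambda>v. x + v) ` Sl" by (auto simp: add.commute)
      then have "(\<lambda>v. 1 *\<^sub>R v + x) ` Sl \<in> sets lebesgue" using lebesgue_sets_translation[OF Slm] by simp
      then show ?thesis by (intro mult_left_mono emeasure_mono sub) auto
    qed
    also have "emeasure lebesgue ((\<lambda>v. 1 *\<^sub>R v + x) ` Sl) = emeasure lebesgue Sl"
      using emeasure_lebesgue_affine[of 1 x Sl] by simp
    also have "emeasure lebesgue Sl \<le> ennreal (6 * 2^?d * ?w * r^?d * w / r)"
      unfolding Sl_def by (rule slab_measure[OF e w])
    also have "ennreal ((r/2) powr (-(real ?d + s))) * ennreal (6 * 2^?d * ?w * r^?d * w / r)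
        = ennreal ((r/2) powr (-(real ?d + s)) * (6 * 2^?d * ?w * r^?d * w / r))"
    proof -
      have A: "0 \<le> (r/2) powr (-(real ?d + s))" by simp
      have B: "0 \<le> 6 * 2^?d * ?w * r^?d * w / r" using r w by simp
      show ?thesis using ennreal_mult[OF A B] by metis
    qed
    also have "(r/2) powr (-(real ?d + s)) * (6 * 2^?d * ?w * r^?d * w / r) = b k"
      unfolding b_def q_def r_def w_def by (rule powr_alg2[OF t(1)])
    finally show ?thesis by (simp add: mult_left_mono)
  qed
  have q: "0 < q" "q < 1" unfolding q_def using s by (auto simp: powr_less_one)
  have sb: "summable b" unfolding b_def
    using q by (intro summable_mult summable_geometric) auto
  have bnn: "0 \<le> b k" for k unfolding b_def using q rho by auto
  have cover: "{y. \<bar>(y - x) \<bullet> e\<bar> \<le> (norm (y - x))^2/(2*\<rho>) \<and> 0 < norm (y - x) \<and> norm (y - x) < t} \<subseteq> (\<Union>k. T k)"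
  proof
    fix y assume y: "y \<in> {y. \<bar>(y - x) \<bullet> e\<bar> \<le> (norm (y - x))^2/(2*\<rho>) \<and> 0 < norm (y - x) \<and> norm (y - x) < t}"
    then have "1 \<le> t / norm (y - x)" by auto
    then obtain k :: nat where k: "2^k \<le> t / norm (y - x)" "t / norm (y - x) < 2^(Suc k)"
      using dyadic_exists by blast
    have ny: "0 < norm (y - x)" using y by auto
    have "norm (y - x) \<le> t/2^k" using k(1) ny by (simp add: field_simps)
    moreover have "t/2^k/2 < norm (y - x)" using k(2) ny by (simp add: field_simps)
    ultimately have "y \<in> T k" using y unfolding T_def by auto
    then show "y \<in> (\<Union>k. T k)" by blast
  qed
  have "(\<integral>\<^sup>+y. indicator {y. \<bar>(y - x) \<bullet> e\<bar> \<le> (norm (y - x))^2/(2*\<rho>) \<and> 0 < norm (y - x) \<and> norm (y - x) < t} y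
            * ennreal (norm (x - y) powr (-(real DIM('a) + s))) \<partial>lebesgue) \<le> ennreal (\<Sum>k. b k)"
    by (rule nn_shell_sum[OF Tm dj _ bound sb bnn cover]) measurable
  also have "(\<Sum>k. b k) = cuspC s ?d * t powr (1 - s) / \<rho>"
  proof -
    have "(\<Sum>k. b k) = 3 * ?w * 2^?d * 2 powr (real ?d + s) / \<rho> * t powr (1 - s) * (\<Sum>k. q^k)"
      unfolding b_def using q by (subst suminf_mult[symmetric]) (auto intro!: summable_geometric simp: mult.assoc)
    also have "\<dots> = cuspC s ?d * t powr (1 - s) / \<rho>"
      using q by (simp add: suminf_geometric cuspC_def q_def)
    finally show ?thesis .
  qed
  finally show ?thesis .
qed


lemma reflect_measurable: "(\<lambda>y. t - y) \<in> lebesgue \<rightarrow>\<^sub>M (lebesgue :: 'a::euclidean_space measure)"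
proof -
  have "(\<lambda>y::'a. t + (\<Sum>j\<in>Basis. ((\<lambda>_. -1::real) j * (y \<bullet> j)) *\<^sub>R j)) \<in> lebesgue \<rightarrow>\<^sub>M lebesgue"
    by (rule lebesgue_affine_measurable) simp
  moreover have "(\<lambda>y::'a. t + (\<Sum>j\<in>Basis. ((\<lambda>_. -1::real) j * (y \<bullet> j)) *\<^sub>R j)) = (\<lambda>y. t - y)"
  proof
    fix y :: 'a
    have "(\<Sum>j\<in>Basis. ((\<lambda>_. -1::real) j * (y \<bullet> j)) *\<^sub>R j) = - (\<Sum>j\<in>Basis. (y \<bullet> j) *\<^sub>R j)"
      by (simp add: sum_negf[symmetric])
    then show "t + (\<Sum>j\<in>Basis. ((\<lambda>_. -1::real) j * (y \<bullet> j)) *\<^sub>R j) = t - y"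
      by (simp add: euclidean_representation)
  qed
  ultimately show ?thesis by simp
qed

lemma lebesgue_reflect: "lebesgue = distr lebesgue (lebesgue :: 'a::euclidean_space measure) (\<lambda>y. t - y)"
proof -
  have "lebesgue = density (distr lebesgue lebesgue (\<lambda>y::'a. t + (\<Sum>j\<in>Basis. ((\<lambda>_. -1::real) j * (y \<bullet> j)) *\<^sub>R j))) (\<lambda>_. (\<Prod>j\<in>(Basis::'a set). \<bar>(\<lambda>_. -1::real) j\<bar>))"
    by (rule lebesgue_affine_euclidean) simp
  moreover have "(\<lambda>y::'a. t + (\<Sum>j\<in>Basis. ((\<lambda>_. -1::real) j * (y \<bullet> j)) *\<^sub>R j)) = (\<lambda>y. t - y)"
  proof
    fix y :: 'a
    have "(\<Sum>j\<in>Basis. ((\<lambda>_. -1::real) j * (y \<bullet> j)) *\<^sub>R j) = - (\<Sum>j\<in>Basis. (y \<bullet> j) *\<^sub>R j)"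
      by (simp add: sum_negf[symmetric])
    then show "t + (\<Sum>j\<in>Basis. ((\<lambda>_. -1::real) j * (y \<bullet> j)) *\<^sub>R j) = t - y"
      by (simp add: euclidean_representation)
  qed
  ultimately show ?thesis by (simp add: density_1)
qed

lemma integral_reflect_leb:
  fixes g :: "'a::euclidean_space \<Rightarrow> real"
  assumes g: "g \<in> borel_measurable lebesgue"
  shows "(\<integral>y. g y \<partial>lebesgue) = (\<integral>y. g (t - y) \<partial>lebesgue)"
proof -
  have "(\<integral>y. g y \<partial>lebesgue) = (\<integral>y. g y \<partial>distr lebesgue lebesgue (\<lambda>y. t - y))"
    by (subst lebesgue_reflect[of t, symmetric]) simp
  also have "\<dots> = (\<integral>y. g (t - y) \<partial>lebesgue)"
    by (rule integral_distr[OF reflect_measurable g])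
  finally show ?thesis .
qed

lemma integrable_reflect_leb:
  fixes g :: "'a::euclidean_space \<Rightarrow> real"
  assumes g: "g \<in> borel_measurable lebesgue" "integrable lebesgue g"
  shows "integrable lebesgue (\<lambda>y. g (t - y))"
proof -
  have "integrable (distr lebesgue lebesgue (\<lambda>y. t - y)) g"
    using g(2) by (subst lebesgue_reflect[of t, symmetric]) simp
  then show ?thesis
    using integrable_distr_eq[OF reflect_measurable g(1)] by simp
qed


lemma nn_to_integral:
  fixes f :: "'a \<Rightarrow> real"
  assumes f: "f \<in> borel_measurable M" and nn: "\<And>y. 0 \<le> f y"
    and b: "(\<integral>\<^sup>+y. ennreal (f y) \<partial>M) \<le> ennreal c" and c: "0 \<le> c"
  shows "integrable M f" "(\<integral>y. f y \<partial>M) \<le> c"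
proof -
  show i: "integrable M f"
    using b f nn by (intro integrableI_nonneg) (auto simp: top_unique less_top[symmetric] intro: order.strict_trans1[OF b])
  have "(\<integral>y. f y \<partial>M) = enn2real (\<integral>\<^sup>+y. ennreal (f y) \<partial>M)"
    using f nn by (intro integral_eq_nn_integral) auto
  also have "\<dots> \<le> c" using b c by (simp add: enn2real_leI)
  finally show "(\<integral>y. f y \<partial>M) \<le> c" .
qed

locale kset =
  fixes K :: "'a::euclidean_space \<Rightarrow> real" and E :: "'a set" and lam Lam s :: real
  assumes s: "0 < s" "s < 1" and lam: "0 < lam" "lam \<le> Lam"
    and Kmeas: "K \<in> borel_measurable lebesgue"
    and Kb: "\<And>y. y \<noteq> 0 \<Longrightarrow> lam * norm y powr (-(real DIM('a) + s)) \<le> K y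
                 \<and> K y \<le> Lam * norm y powr (-(real DIM('a) + s)) \<and> K y = K (-y)"
    and Eb: "E \<in> sets borel"
begin

definition F where "F x y = tchi E y * K (x - y)"
definition ph where "ph x y = norm (x - y) powr (-(real DIM('a) + s))"

lemma Em[measurable]: "E \<in> sets lebesgue" using Eb by (rule borel_sets_leb)

lemma Kx_meas[measurable]: "(\<lambda>y. K (x - y)) \<in> borel_measurable lebesgue"
  using measurable_compose[OF reflect_measurable Kmeas] by (simp add: comp_def)

lemma tchi_meas[measurable]: "tchi E \<in> borel_measurable lebesgue"
proof -
  have "tchi E = (\<lambda>y. 1 - 2 * indicator E y)" by (auto simp: tchi_def fun_eq_iff)
  then show ?thesis by simp
qed

lemma F_meas[measurable]: "F x \<in> borel_measurable lebesgue"
  unfolding F_def by measurable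

lemma ph_meas[measurable]: "(\<lambda>y. ennreal (ph x y)) \<in> borel_measurable lebesgue" "ph x \<in> borel_measurable lebesgue"
  unfolding ph_def by (rule meas_phi) (rule borel_to_leb, measurable)

lemma ph_nn: "0 \<le> ph x y" unfolding ph_def by simp

lemma K_bounds:
  assumes "y \<noteq> x" shows "lam * ph x y \<le> K (x - y)" "K (x - y) \<le> Lam * ph x y" "0 \<le> K (x - y)"
    "K (y - x) = K (x - y)"
proof -
  have "x - y \<noteq> 0" using assms by simp
  from Kb[OF this] show "lam * ph x y \<le> K (x - y)" "K (x - y) \<le> Lam * ph x y"
    "K (y - x) = K (x - y)"
    unfolding ph_def by auto
  then show "0 \<le> K (x - y)" using lam ph_nn[of x y] by (meson mult_nonneg_nonneg less_imp_le order_trans)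
qed

lemma absF: "y \<noteq> x \<Longrightarrow> \<bar>F x y\<bar> \<le> Lam * ph x y"
  using K_bounds[of y x] by (auto simp: F_def tchi_def)

lemma F_low: "y \<noteq> x \<Longrightarrow> - Lam * (indicator E y * ph x y) \<le> F x y"
  using K_bounds[of y x] ph_nn[of x y] lam by (auto simp: F_def tchi_def indicator_def)

lemma integrable_F:
  assumes S: "S \<in> sets lebesgue" and xS: "x \<notin> S"
    and fin: "(\<integral>\<^sup>+y. indicator S y * ennreal (ph x y) \<partial>lebesgue) < \<infinity>"
  shows "integrable lebesgue (\<lambda>y. indicator S y * F x y)"
proof (rule integrableI_bounded)
  show "(\<lambda>y. indicator S y * F x y) \<in> borel_measurable lebesgue" using S by measurable
  have "(\<integral>\<^sup>+y. ennreal (norm (indicator S y * F x y)) \<partial>lebesgue) \<le> (\<integral>\<^sup>+y. ennreal Lam * (indicator S y * ennreal (ph x y)) \<partial>lebesgue)"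
  proof (intro nn_integral_mono)
    fix y
    show "ennreal (norm (indicator S y * F x y)) \<le> ennreal Lam * (indicator S y * ennreal (ph x y))"
    proof (cases "y \<in> S")
      case True
      then have "y \<noteq> x" using xS by auto
      then have "norm (indicator S y * F x y) \<le> Lam * ph x y" using True absF by simp
      then show ?thesis using True lam ph_nn[of x y] by (simp add: ennreal_mult[symmetric] ennreal_leI)
    qed simp
  qed
  also have "\<dots> = ennreal Lam * (\<integral>\<^sup>+y. indicator S y * ennreal (ph x y) \<partial>lebesgue)"
  proof -
    note S[measurable]
    show ?thesis by (intro nn_integral_cmult) measurable
  qed
  also have "\<dots> < \<infinity>" using fin by (simp add: ennreal_mult_less_top)
  finally show "(\<integral>\<^sup>+y. ennreal (norm (indicator S y * F x y)) \<partial>lebesgue) < \<infinity>" .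
qed

lemma integral_F_lower:
  assumes S: "S \<in> sets lebesgue" and xS: "x \<notin> S"
    and fin: "(\<integral>\<^sup>+y. indicator S y * ennreal (ph x y) \<partial>lebesgue) < \<infinity>"
    and b: "(\<integral>\<^sup>+y. indicator (S \<inter> E) y * ennreal (ph x y) \<partial>lebesgue) \<le> ennreal c" and c: "0 \<le> c"
  shows "- Lam * c \<le> (\<integral>y. indicator S y * F x y \<partial>lebesgue)"
proof -
  have b': "(\<integral>\<^sup>+y. ennreal (indicator (S \<inter> E) y * ph x y) \<partial>lebesgue) \<le> ennreal c"
    using b by (simp add: ennreal_mult' ennreal_indicator)
  have m: "(\<lambda>y. indicator (S \<inter> E) y * ph x y) \<in> borel_measurable lebesgue" using S by measurable
  have nn: "0 \<le> indicator (S \<inter> E) y * ph x y" for y using ph_nn[of x y] by simp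
  note I = nn_to_integral[OF m nn b' c]
  have "- Lam * c \<le> - Lam * (\<integral>y. indicator (S \<inter> E) y * ph x y \<partial>lebesgue)"
    using I(2) lam by simp
  also have "\<dots> = (\<integral>y. - Lam * (indicator (S \<inter> E) y * ph x y) \<partial>lebesgue)" by simp
  also have "\<dots> \<le> (\<integral>y. indicator S y * F x y \<partial>lebesgue)"
  proof (rule integral_mono)
    show "integrable lebesgue (\<lambda>y. - Lam * (indicator (S \<inter> E) y * ph x y))" using I(1) by simp
    show "integrable lebesgue (\<lambda>y. indicator S y * F x y)" by (rule integrable_F[OF S xS fin])
    fix y show "- Lam * (indicator (S \<inter> E) y * ph x y) \<le> indicator S y * F x y"
    proof (cases "y \<in> S")
      case True then have "y \<noteq> x" using xS by auto
      then show ?thesis using F_low[of y x] True by (simp add: indicator_def)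
    qed (simp add: indicator_def)
  qed
  finally show ?thesis .
qed

end


locale touch = kset K E lam Lam s for K :: "'a::euclidean_space \<Rightarrow> real" and E lam Lam s +
  fixes x z :: 'a and \<rho> :: real
  assumes rho: "0 < \<rho>" and xz: "dist z x = \<rho>" and BE: "ball z \<rho> \<inter> E = {}"
begin

definition "e = (1/\<rho>) *\<^sub>R (z - x)"
definition "B = ball z \<rho>"
definition "Bp = ball (x + x - z) \<rho>"
definition "D = UNIV - (B \<union> Bp \<union> {x})"
definition "cusp t = {y. \<bar>(y - x) \<bullet> e\<bar> \<le> (norm (y - x))^2/(2*\<rho>) \<and> 0 < norm (y - x) \<and> norm (y - x) < t}"

lemma nu: "norm (z - x) = \<rho>" using xz by (simp add: dist_norm)

lemma norm_e: "norm e = 1" unfolding e_def using nu rho by simp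

lemma inner_e: "(y - x) \<bullet> e = ((y - x) \<bullet> (z - x)) / \<rho>"
  unfolding e_def by (simp add: inner_commute)

lemma sq_expand1: "(norm (z - y))^2 = \<rho>^2 - 2 * ((y - x) \<bullet> (z - x)) + (norm (y - x))^2"
proof -
  have "z - y = (z - x) - (y - x)" by simp
  then have "(norm (z - y))^2 = (norm ((z - x) - (y - x)))^2" by simp
  also have "\<dots> = (norm (z - x))^2 - 2 * ((y - x) \<bullet> (z - x)) + (norm (y - x))^2"
    by (simp add: power2_norm_eq_inner inner_diff_left inner_diff_right inner_commute algebra_simps)
  finally show ?thesis using nu by simp
qed

lemma sq_expand2: "(norm (x + x - z - y))^2 = \<rho>^2 + 2 * ((y - x) \<bullet> (z - x)) + (norm (y - x))^2"
proof -
  have "x + x - z - y = - ((z - x) + (y - x))" by (simp add: algebra_simps)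
  then have "(norm (x + x - z - y))^2 = (norm ((z - x) + (y - x)))^2" by (simp only: norm_minus_cancel)
  also have "\<dots> = (norm (z - x))^2 + 2 * ((y - x) \<bullet> (z - x)) + (norm (y - x))^2"
    by (simp add: power2_norm_eq_inner inner_add_left inner_add_right inner_commute algebra_simps)
  finally show ?thesis using nu by simp
qed

lemma notB: assumes "y \<notin> B" shows "(y - x) \<bullet> e \<le> (norm (y - x))^2/(2*\<rho>)"
proof -
  have "\<rho> \<le> norm (z - y)" using assms unfolding B_def by (simp add: dist_norm)
  then have "\<rho>^2 \<le> (norm (z - y))^2" using rho by (intro power_mono) auto
  then have "2 * ((y - x) \<bullet> (z - x)) \<le> (norm (y - x))^2" using sq_expand1[of y] by simp
  then show ?thesis using rho unfolding inner_e by (simp add: field_simps)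
qed

lemma notBp: assumes "y \<notin> Bp" shows "- ((y - x) \<bullet> e) \<le> (norm (y - x))^2/(2*\<rho>)"
proof -
  have "\<rho> \<le> norm (x + x - z - y)" using assms unfolding Bp_def by (simp add: dist_norm)
  then have "\<rho>^2 \<le> (norm (x + x - z - y))^2" using rho by (intro power_mono) auto
  then have "- 2 * ((y - x) \<bullet> (z - x)) \<le> (norm (y - x))^2" using sq_expand2[of y] by simp
  then show ?thesis using rho unfolding inner_e by (simp add: field_simps)
qed

lemma D_cusp: assumes "y \<in> D" "norm (y - x) < t" shows "y \<in> cusp t"
  using notB[of y] notBp[of y] assms unfolding D_def cusp_def by (auto simp: abs_le_iff)

lemma B_Bp_disj: "B \<inter> Bp = {}"
proof (rule ccontr)
  assume "B \<inter> Bp \<noteq> {}"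
  then obtain y where y: "norm (z - y) < \<rho>" "norm (x + x - z - y) < \<rho>"
    unfolding B_def Bp_def by (auto simp: dist_norm)
  have "2 * norm (z - x) = norm ((z - y) - (x + x - z - y))"
  proof -
    have "(z - y) - (x + x - z - y) = 2 *\<^sub>R (z - x)" by (simp add: algebra_simps scaleR_2)
    then show ?thesis by simp
  qed
  also have "\<dots> \<le> norm (z - y) + norm (x + x - z - y)" by (rule norm_triangle_ineq4)
  finally show False using y nu by linarith
qed

lemma x_notin: "x \<notin> B" "x \<notin> Bp"
proof -
  show "x \<notin> B" unfolding B_def using nu by (simp add: dist_norm)
  have "x + x - z - x = - (z - x)" by (simp add: algebra_simps)
  then have "norm (x + x - z - x) = \<rho>" using nu by (simp only: norm_minus_cancel)
  then show "x \<notin> Bp" unfolding Bp_def by (simp add: dist_norm)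
qed

lemma Bp_sub: "Bp \<subseteq> ball x (2*\<rho>)"
proof
  fix y assume "y \<in> Bp"
  then have "norm (x + x - z - y) < \<rho>" unfolding Bp_def by (simp add: dist_norm)
  moreover have "norm (x - y) \<le> norm (x + x - z - y) + norm (z - x)"
    using norm_triangle_ineq[of "x + x - z - y" "z - x"] by (simp add: algebra_simps)
  ultimately have "norm (x - y) < 2*\<rho>" using nu by linarith
  then show "y \<in> ball x (2*\<rho>)" by (simp add: dist_norm)
qed

definition "cG = z - (1/4) *\<^sub>R (z - x)"
definition "G = ball cG (\<rho>/4)"

lemma comb14: "(1/4::real) *\<^sub>R v + (3/4) *\<^sub>R v = (v::'a)"
proof -
  have h: "(1/4 + 3/4::real) *\<^sub>R v = (1/4) *\<^sub>R v + (3/4) *\<^sub>R v" by (rule scaleR_add_left)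
  have "(1/4 + 3/4::real) = 1" by simp
  then show ?thesis by (metis h scaleR_one)
qed

lemma cG_x: "cG - (3/4) *\<^sub>R (z - x) = x"
proof -
  have "cG - (3/4) *\<^sub>R (z - x) = z - ((1/4) *\<^sub>R (z - x) + (3/4) *\<^sub>R (z - x))"
    unfolding cG_def by (simp add: diff_diff_eq)
  also have "\<dots> = x" by (simp only: comb14) simp
  finally show ?thesis .
qed

lemma G_props: assumes "y \<in> G" shows "y \<in> B" "\<rho>/2 < norm (x - y)" "norm (x - y) < \<rho>"
proof -
  have a: "norm (cG - y) < \<rho>/4" using assms unfolding G_def by (simp add: dist_norm)
  have n34: "norm ((3/4) *\<^sub>R (z - x)) = 3/4*\<rho>" using nu by simp
  have n14: "norm ((1/4) *\<^sub>R (z - x)) = 1/4*\<rho>" using nu by simp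
  have "z - y = (cG - y) + (1/4) *\<^sub>R (z - x)" unfolding cG_def by (simp add: algebra_simps)
  then have "norm (z - y) \<le> norm (cG - y) + norm ((1/4) *\<^sub>R (z - x))"
    by (metis norm_triangle_ineq)
  moreover have "norm (cG - y) + norm ((1/4) *\<^sub>R (z - x)) < \<rho>"
    using a rho unfolding n14 by simp
  ultimately have "norm (z - y) < \<rho>" by simp
  then show "y \<in> B" unfolding B_def by (simp add: dist_norm)
  have xy: "x - y = (cG - y) - (3/4) *\<^sub>R (z - x)"
  proof -
    have "x - y = (cG - (3/4) *\<^sub>R (z - x)) - y" by (simp only: cG_x)
    also have "\<dots> = (cG - y) - (3/4) *\<^sub>R (z - x)" by (simp add: algebra_simps)
    finally show ?thesis .
  qed
  have "norm ((3/4) *\<^sub>R (z - x)) - norm (cG - y) \<le> norm ((3/4) *\<^sub>R (z - x) - (cG - y))"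
    by (rule norm_triangle_ineq2)
  also have "\<dots> = norm (x - y)" unfolding xy by (rule norm_minus_commute)
  finally have "norm ((3/4) *\<^sub>R (z - x)) - norm (cG - y) \<le> norm (x - y)" .
  then show "\<rho>/2 < norm (x - y)" using a n34 by linarith
  have "norm (x - y) \<le> norm (cG - y) + norm ((3/4) *\<^sub>R (z - x))"
    unfolding xy by (rule norm_triangle_ineq4)
  then show "norm (x - y) < \<rho>" using a n34 by linarith
qed

lemma reflect_B: "(x + x - y \<in> Bp) = (y \<in> B)"
  unfolding B_def Bp_def by (simp add: dist_norm algebra_simps norm_minus_commute)

lemma reflect_ball: "(x + x - y \<in> ball x r) = (y \<in> ball x r)"
  by (simp add: dist_norm algebra_simps norm_minus_commute)

end


lemma nn_split2:
  fixes f :: "'a::euclidean_space \<Rightarrow> ennreal"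
  assumes [measurable]: "S1 \<in> sets lebesgue" "S2 \<in> sets lebesgue" "f \<in> borel_measurable lebesgue"
    and sub: "\<And>y. y \<in> S \<Longrightarrow> y \<in> S1 \<or> y \<in> S2"
  shows "(\<integral>\<^sup>+y. indicator S y * f y \<partial>lebesgue) \<le> (\<integral>\<^sup>+y. indicator S1 y * f y \<partial>lebesgue) + (\<integral>\<^sup>+y. indicator S2 y * f y \<partial>lebesgue)"
proof -
  have "(\<integral>\<^sup>+y. indicator S y * f y \<partial>lebesgue) \<le> (\<integral>\<^sup>+y. indicator S1 y * f y + indicator S2 y * f y \<partial>lebesgue)"
    by (intro nn_integral_mono) (use sub in \<open>auto simp: indicator_def\<close>)
  also have "\<dots> = (\<integral>\<^sup>+y. indicator S1 y * f y \<partial>lebesgue) + (\<integral>\<^sup>+y. indicator S2 y * f y \<partial>lebesgue)"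
    by (intro nn_integral_add) measurable
  finally show ?thesis .
qed

lemma nn_split3:
  fixes f :: "'a::euclidean_space \<Rightarrow> ennreal"
  assumes [measurable]: "S1 \<in> sets lebesgue" "S2 \<in> sets lebesgue" "S3 \<in> sets lebesgue" "f \<in> borel_measurable lebesgue"
    and sub: "\<And>y. y \<in> S \<Longrightarrow> y \<in> S1 \<or> y \<in> S2 \<or> y \<in> S3"
  shows "(\<integral>\<^sup>+y. indicator S y * f y \<partial>lebesgue) \<le> (\<integral>\<^sup>+y. indicator S1 y * f y \<partial>lebesgue) + (\<integral>\<^sup>+y. indicator S2 y * f y \<partial>lebesgue) + (\<integral>\<^sup>+y. indicator S3 y * f y \<partial>lebesgue)"
proof -
  have "(\<integral>\<^sup>+y. indicator S y * f y \<partial>lebesgue) \<le> (\<integral>\<^sup>+y. indicator (S1 \<union> S2) y * f y \<partial>lebesgue) + (\<integral>\<^sup>+y. indicator S3 y * f y \<partial>lebesgue)"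
    by (rule nn_split2) (use sub in auto)
  also have "(\<integral>\<^sup>+y. indicator (S1 \<union> S2) y * f y \<partial>lebesgue) \<le> (\<integral>\<^sup>+y. indicator S1 y * f y \<partial>lebesgue) + (\<integral>\<^sup>+y. indicator S2 y * f y \<partial>lebesgue)"
    by (rule nn_split2) auto
  finally show ?thesis by (simp add: add_right_mono)
qed

context touch
begin

lemma B_meas[measurable]: "B \<in> sets lebesgue" "Bp \<in> sets lebesgue" "D \<in> sets lebesgue"
  unfolding B_def Bp_def D_def by (auto intro!: borel_sets_leb)

lemma cusp_meas[measurable]: "cusp t \<in> sets lebesgue"
  unfolding cusp_def by (rule borel_sets_leb) measurable

lemma ball_leb[measurable]: "ball c r \<in> sets lebesgue" "{y. r \<le> norm (c - y)} \<in> sets lebesgue"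
  by (auto intro!: borel_sets_leb)

lemma tail_ph: "0 < eps \<Longrightarrow> (\<integral>\<^sup>+y. indicator {y. eps \<le> norm (x - y)} y * ennreal (ph x y) \<partial>lebesgue)
      \<le> ennreal (tailC s DIM('a) * eps powr (-s))"
  unfolding ph_def using s by (intro tail_bound) auto

lemma cusp_ph: "0 < t \<Longrightarrow> 3*t \<le> \<rho> \<Longrightarrow> (\<integral>\<^sup>+y. indicator (cusp t) y * ennreal (ph x y) \<partial>lebesgue)
      \<le> ennreal (cuspC s DIM('a) * t powr (1 - s) / \<rho>)"
  unfolding ph_def cusp_def using s rho by (intro cusp_bound norm_e) auto

lemma fin_out:
  assumes S: "S \<in> sets lebesgue" and eps: "0 < eps" and sub: "S \<subseteq> {y. eps \<le> norm (x - y)}"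
  shows "(\<integral>\<^sup>+y. indicator S y * ennreal (ph x y) \<partial>lebesgue) < \<infinity>"
proof -
  have "(\<integral>\<^sup>+y. indicator S y * ennreal (ph x y) \<partial>lebesgue) \<le> (\<integral>\<^sup>+y. indicator {y. eps \<le> norm (x - y)} y * ennreal (ph x y) \<partial>lebesgue)"
    using sub by (intro nn_integral_mono) (auto simp: indicator_def)
  also have "\<dots> \<le> ennreal (tailC s DIM('a) * eps powr (-s))" by (rule tail_ph[OF eps])
  also have "\<dots> < \<infinity>" by simp
  finally show ?thesis .
qed

lemma fin_D:
  assumes S: "S \<in> sets lebesgue" and sub: "S \<subseteq> D"
  shows "(\<integral>\<^sup>+y. indicator S y * ennreal (ph x y) \<partial>lebesgue) < \<infinity>"
proof -
  have "(\<integral>\<^sup>+y. indicator S y * ennreal (ph x y) \<partial>lebesgue)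
     \<le> (\<integral>\<^sup>+y. indicator (cusp (\<rho>/3)) y * ennreal (ph x y) \<partial>lebesgue) + (\<integral>\<^sup>+y. indicator {y. \<rho>/3 \<le> norm (x - y)} y * ennreal (ph x y) \<partial>lebesgue)"
  proof (rule nn_split2)
    fix y assume "y \<in> S"
    then have "y \<in> D" using sub by auto
    then show "y \<in> cusp (\<rho>/3) \<or> y \<in> {y. \<rho>/3 \<le> norm (x - y)}"
      using D_cusp[of y "\<rho>/3"] by (auto simp: norm_minus_commute)
  qed auto
  also have "\<dots> \<le> ennreal (cuspC s DIM('a) * (\<rho>/3) powr (1 - s) / \<rho>) + ennreal (tailC s DIM('a) * (\<rho>/3) powr (-s))"
    using rho by (intro add_mono cusp_ph tail_ph) auto
  also have "\<dots> < \<infinity>" by simp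
  finally show ?thesis .
qed

end


context touch
begin

definition "P1 eps = (\<integral>y. indicator (B - ball x eps) y * F x y \<partial>lebesgue)"
definition "P2 eps = (\<integral>y. indicator (Bp - ball x eps) y * F x y \<partial>lebesgue)"
definition "Qe eps = (\<integral>y. indicator (D - ball x eps) y * F x y \<partial>lebesgue)"
definition "Q0 = (\<integral>y. indicator D y * F x y \<partial>lebesgue)"
definition "Pe eps = P1 eps + P2 eps"

lemma int_out:
  assumes S: "S \<in> sets lebesgue" and eps: "0 < eps" and sub: "S \<subseteq> UNIV - ball x eps"
  shows "integrable lebesgue (\<lambda>y. indicator S y * F x y)"
proof (rule integrable_F[OF S])
  show "x \<notin> S" using sub eps by auto
  show "(\<integral>\<^sup>+y. indicator S y * ennreal (ph x y) \<partial>lebesgue) < \<infinity>"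
    using sub by (intro fin_out[OF S eps]) (auto simp: dist_norm)
qed

lemma int_D:
  assumes S: "S \<in> sets lebesgue" and sub: "S \<subseteq> D"
  shows "integrable lebesgue (\<lambda>y. indicator S y * F x y)"
proof (rule integrable_F[OF S])
  show "x \<notin> S" using sub by (auto simp: D_def)
  show "(\<integral>\<^sup>+y. indicator S y * ennreal (ph x y) \<partial>lebesgue) < \<infinity>"
    by (rule fin_D[OF S sub])
qed

lemma trunc_split:
  assumes eps: "0 < eps"
  shows "trunc_curv K E x eps = Pe eps + Qe eps"
proof -
  have i1: "integrable lebesgue (\<lambda>y. indicator (B - ball x eps) y * F x y)" by (rule int_out[OF _ eps]) auto
  have i2: "integrable lebesgue (\<lambda>y. indicator (Bp - ball x eps) y * F x y)" by (rule int_out[OF _ eps]) auto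
  have i3: "integrable lebesgue (\<lambda>y. indicator (D - ball x eps) y * F x y)" by (rule int_out[OF _ eps]) auto
  have pw: "indicator (UNIV - ball x eps) y * (tchi E y * K (x - y))
      = (indicator (B - ball x eps) y * F x y + indicator (Bp - ball x eps) y * F x y) + indicator (D - ball x eps) y * F x y" for y
  proof (cases "y \<in> ball x eps")
    case True then show ?thesis by simp
  next
    case False
    then have "y \<noteq> x" using eps by auto
    then have "(y \<in> B \<and> y \<notin> Bp \<and> y \<notin> D) \<or> (y \<notin> B \<and> y \<in> Bp \<and> y \<notin> D) \<or> (y \<notin> B \<and> y \<notin> Bp \<and> y \<in> D)"
      using B_Bp_disj unfolding D_def by blast
    then show ?thesis using False by (auto simp: F_def indicator_def)
  qed
  have "trunc_curv K E x eps = (\<integral>y. (indicator (B - ball x eps) y * F x y + indicator (Bp - ball x eps) y * F x y) + indicator (D - ball x eps) y * F x y \<partial>lebesgue)"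
    unfolding trunc_curv_def by (simp only: pw)
  also have "\<dots> = (\<integral>y. indicator (B - ball x eps) y * F x y + indicator (Bp - ball x eps) y * F x y \<partial>lebesgue) + Qe eps"
    unfolding Qe_def by (intro Bochner_Integration.integral_add Bochner_Integration.integrable_add i1 i2 i3)
  also have "(\<integral>y. indicator (B - ball x eps) y * F x y + indicator (Bp - ball x eps) y * F x y \<partial>lebesgue) = Pe eps"
    unfolding Pe_def P1_def P2_def by (intro Bochner_Integration.integral_add i1 i2)
  finally show ?thesis .
qed

lemma Q_split:
  assumes eps: "0 < eps"
  shows "Q0 = Qe eps + (\<integral>y. indicator (D \<inter> ball x eps) y * F x y \<partial>lebesgue)"
proof -
  have i3: "integrable lebesgue (\<lambda>y. indicator (D - ball x eps) y * F x y)" by (rule int_D) auto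
  have i4: "integrable lebesgue (\<lambda>y. indicator (D \<inter> ball x eps) y * F x y)" by (rule int_D) auto
  have pw: "indicator D y * F x y = indicator (D - ball x eps) y * F x y + indicator (D \<inter> ball x eps) y * F x y" for y
    by (auto simp: indicator_def)
  show ?thesis unfolding Q0_def Qe_def pw by (intro Bochner_Integration.integral_add i3 i4)
qed

definition "fr eps y = indicator (B - ball x eps) y * ((1 + tchi E (x + x - y)) * K (x - y))"

lemma Pe_refl:
  assumes eps: "0 < eps"
  shows "Pe eps = (\<integral>y. fr eps y \<partial>lebesgue)" "integrable lebesgue (fr eps)"
proof -
  have i1: "integrable lebesgue (\<lambda>y. indicator (B - ball x eps) y * F x y)" by (rule int_out[OF _ eps]) auto
  have i2: "integrable lebesgue (\<lambda>y. indicator (Bp - ball x eps) y * F x y)" by (rule int_out[OF _ eps]) auto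
  have m2: "(\<lambda>y. indicator (Bp - ball x eps) y * F x y) \<in> borel_measurable lebesgue" by measurable
  have pw: "indicator (Bp - ball x eps) (x + x - y) * F x (x + x - y) = indicator (B - ball x eps) y * (tchi E (x + x - y) * K (x - y))" for y
  proof (cases "y \<in> B - ball x eps")
    case True
    then have "y \<noteq> x" using eps by auto
    then have "K (y - x) = K (x - y)" by (rule K_bounds(4))
    moreover have "x - (x + x - y) = y - x" by (simp add: algebra_simps)
    ultimately show ?thesis using True reflect_B[of y] reflect_ball[of y eps] by (simp add: F_def)
  next
    case False
    then show ?thesis using reflect_B[of y] reflect_ball[of y eps] by (auto simp: indicator_def)
  qed
  have P2r: "P2 eps = (\<integral>y. indicator (B - ball x eps) y * (tchi E (x + x - y) * K (x - y)) \<partial>lebesgue)"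
    unfolding P2_def by (subst integral_reflect_leb[OF m2, of "x + x"]) (simp only: pw)
  have i2r: "integrable lebesgue (\<lambda>y. indicator (B - ball x eps) y * (tchi E (x + x - y) * K (x - y)))"
    using integrable_reflect_leb[OF m2 i2, of "x + x"] by (simp only: pw)
  have pw2: "indicator (B - ball x eps) y * F x y + indicator (B - ball x eps) y * (tchi E (x + x - y) * K (x - y)) = fr eps y" for y
  proof (cases "y \<in> B")
    case True
    then have "y \<notin> E" using BE unfolding B_def by auto
    then show ?thesis unfolding fr_def F_def by (simp add: tchi_def algebra_simps)
  qed (simp add: fr_def)
  have "integrable lebesgue (\<lambda>y. indicator (B - ball x eps) y * F x y + indicator (B - ball x eps) y * (tchi E (x + x - y) * K (x - y)))"
    by (rule Bochner_Integration.integrable_add[OF i1 i2r])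
  then show "integrable lebesgue (fr eps)" by (simp only: pw2)
  have "Pe eps = (\<integral>y. indicator (B - ball x eps) y * F x y + indicator (B - ball x eps) y * (tchi E (x + x - y) * K (x - y)) \<partial>lebesgue)"
    unfolding Pe_def P1_def P2r by (intro Bochner_Integration.integral_add[symmetric] i1 i2r)
  then show "Pe eps = (\<integral>y. fr eps y \<partial>lebesgue)" by (simp only: pw2)
qed

lemma Pe_mono:
  assumes e1: "0 < e1" and le: "e1 \<le> e2"
  shows "Pe e2 \<le> Pe e1"
proof -
  have e2: "0 < e2" using e1 le by simp
  have "(\<integral>y. fr e2 y \<partial>lebesgue) \<le> (\<integral>y. fr e1 y \<partial>lebesgue)"
  proof (rule integral_mono[OF Pe_refl(2)[OF e2] Pe_refl(2)[OF e1]])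
    fix y
    show "fr e2 y \<le> fr e1 y"
    proof (cases "y \<in> B - ball x e2")
      case True
      then have "y \<noteq> x" using e2 by auto
      then have "0 \<le> K (x - y)" by (rule K_bounds(3))
      moreover have "0 \<le> 1 + tchi E (x + x - y)" by (simp add: tchi_def)
      moreover have "y \<in> B - ball x e1" using True le by auto
      ultimately show ?thesis using True by (simp add: fr_def)
    next
      case False
      show ?thesis
      proof (cases "y \<in> B - ball x e1")
        case True
        then have "y \<noteq> x" using e1 by auto
        then have "0 \<le> K (x - y)" by (rule K_bounds(3))
        moreover have "0 \<le> 1 + tchi E (x + x - y)" by (simp add: tchi_def)
        ultimately show ?thesis using True False by (simp add: fr_def)
      qed (use False in \<open>simp add: fr_def\<close>)
    qed
  qed
  then show ?thesis using Pe_refl(1)[OF e1] Pe_refl(1)[OF e2] by simp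
qed

end


context touch
begin

lemma Q_close:
  assumes eps: "0 < eps" "3*eps \<le> \<rho>"
  shows "\<bar>Qe eps - Q0\<bar> \<le> Lam * (cuspC s DIM('a) * eps powr (1 - s) / \<rho>)"
proof -
  have i4: "integrable lebesgue (\<lambda>y. indicator (D \<inter> ball x eps) y * F x y)" by (rule int_D) auto
  have cb: "(\<integral>\<^sup>+y. ennreal (indicator (cusp eps) y * ph x y) \<partial>lebesgue) \<le> ennreal (cuspC s DIM('a) * eps powr (1 - s) / \<rho>)"
    using cusp_ph[OF eps] by (simp add: ennreal_mult' ennreal_indicator)
  have c0: "0 \<le> cuspC s DIM('a) * eps powr (1 - s) / \<rho>"
    using cuspC_pos[OF s(2), of "DIM('a)"] rho by (intro divide_nonneg_pos mult_nonneg_nonneg) auto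
  have m: "(\<lambda>y. indicator (cusp eps) y * ph x y) \<in> borel_measurable lebesgue" by measurable
  have nn: "\<And>y. 0 \<le> indicator (cusp eps) y * ph x y" by (simp add: indicator_def ph_def)
  note I = nn_to_integral[OF m nn cb c0]
  have "\<bar>Qe eps - Q0\<bar> = \<bar>\<integral>y. indicator (D \<inter> ball x eps) y * F x y \<partial>lebesgue\<bar>"
    using Q_split[OF eps(1)] by simp
  also have "\<dots> \<le> (\<integral>y. \<bar>indicator (D \<inter> ball x eps) y * F x y\<bar> \<partial>lebesgue)" by (rule integral_abs_bound)
  also have "\<dots> \<le> (\<integral>y. Lam * (indicator (cusp eps) y * ph x y) \<partial>lebesgue)"
  proof (rule integral_mono)
    show "integrable lebesgue (\<lambda>y. \<bar>indicator (D \<inter> ball x eps) y * F x y\<bar>)" using i4 by simp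
    show "integrable lebesgue (\<lambda>y. Lam * (indicator (cusp eps) y * ph x y))"
      using I(1) ph_nn by simp
    fix y show "\<bar>indicator (D \<inter> ball x eps) y * F x y\<bar> \<le> Lam * (indicator (cusp eps) y * ph x y)"
    proof (cases "y \<in> D \<inter> ball x eps")
      case True
      then have "y \<in> cusp eps" using D_cusp[of y eps] by (auto simp: dist_norm norm_minus_commute)
      moreover have "y \<noteq> x" using True by (auto simp: D_def)
      ultimately show ?thesis using True absF[of y x] by simp
    next
      case False then show ?thesis using lam ph_nn[of x y] by (auto simp: indicator_def)
    qed
  qed
  also have "\<dots> = Lam * (\<integral>y. indicator (cusp eps) y * ph x y \<partial>lebesgue)" by simp
  also have "\<dots> \<le> Lam * (cuspC s DIM('a) * eps powr (1 - s) / \<rho>)"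
    using I(2) lam by (intro mult_left_mono) (auto simp: ph_nn)
  finally show ?thesis .
qed

lemma Q_lim: "(Qe \<longlongrightarrow> Q0) (at_right 0)"
proof (rule LIM_zero_cancel)
  let ?C = "Lam * (cuspC s DIM('a) / \<rho>)"
  have "((\<lambda>eps::real. eps powr (1 - s)) \<longlongrightarrow> 0) (at_right 0)"
  proof (rule tendsto_zero_powrI[where b="1-s"])
    show "((\<lambda>x::real. x) \<longlongrightarrow> 0) (at_right 0)" by (rule tendsto_ident_at)
    show "((\<lambda>x::real. 1 - s) \<longlongrightarrow> 1 - s) (at_right 0)" by simp
    show "\<forall>\<^sub>F x in at_right 0. 0 \<le> (x::real)"
      using eventually_at_right_less[of "0::real"] by (rule eventually_mono) simp
    show "0 < 1 - s" using s by simp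
  qed
  show "((\<lambda>eps. Qe eps - Q0) \<longlongrightarrow> 0) (at_right 0)"
  proof (rule tendsto_0_le[OF \<open>((\<lambda>eps::real. eps powr (1 - s)) \<longlongrightarrow> 0) (at_right 0)\<close>, of _ ?C])
    have "\<forall>\<^sub>F eps in at_right 0. 0 < eps \<and> 3*eps \<le> \<rho>"
      unfolding eventually_at_right[OF zero_less_one]
      using rho by (intro exI[of _ "min 1 (\<rho>/3)"]) auto
    then show "\<forall>\<^sub>F eps in at_right 0. norm (Qe eps - Q0) \<le> norm (eps powr (1 - s)) * ?C"
    proof (rule eventually_mono)
      fix eps :: real assume e: "0 < eps \<and> 3*eps \<le> \<rho>"
      then have "\<bar>Qe eps - Q0\<bar> \<le> Lam * (cuspC s DIM('a) * eps powr (1 - s) / \<rho>)" using Q_close by auto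
      then show "norm (Qe eps - Q0) \<le> norm (eps powr (1 - s)) * ?C" by (simp add: field_simps)
    qed
  qed
qed

definition "Sup_P = (SUP eps\<in>{0<..}. ereal (Pe eps))"

lemma P_lim: "((\<lambda>eps. ereal (Pe eps)) \<longlongrightarrow> Sup_P) (at_right 0)"
proof (rule order_tendstoI)
  fix a assume "a < Sup_P"
  then obtain e0 where e0: "e0 \<in> {0<..}" "a < ereal (Pe e0)" unfolding Sup_P_def by (auto simp: less_SUP_iff)
  show "\<forall>\<^sub>F eps in at_right 0. a < ereal (Pe eps)"
    unfolding eventually_at_right[OF zero_less_one]
  proof (intro exI[of _ e0] conjI allI impI)
    show "0 < e0" using e0 by simp
    fix y :: real assume "0 < y" "y < e0"
    then have "Pe e0 \<le> Pe y" by (intro Pe_mono) auto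
    then show "a < ereal (Pe y)" using e0(2) by (meson ereal_less_eq(3) less_le_trans)
  qed
next
  fix a assume a: "Sup_P < a"
  show "\<forall>\<^sub>F eps in at_right 0. ereal (Pe eps) < a"
    unfolding eventually_at_right[OF zero_less_one]
  proof (intro exI[of _ 1] conjI allI impI)
    fix y :: real assume "0 < y" "y < 1"
    then have "ereal (Pe y) \<le> Sup_P" unfolding Sup_P_def by (intro SUP_upper) auto
    then show "ereal (Pe y) < a" using a by simp
  qed simp
qed

lemma curv_eq: "nonlocal_curv K E x = Sup_P + ereal Q0"
proof -
  have "Sup_P \<ge> ereal (Pe 1)" unfolding Sup_P_def by (intro SUP_upper) auto
  then have nm: "Sup_P \<noteq> -\<infinity>" by auto
  have lim: "((\<lambda>eps. ereal (Pe eps) + ereal (Qe eps)) \<longlongrightarrow> Sup_P + ereal Q0) (at_right 0)"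
    by (intro tendsto_add_ereal_nonneg nm P_lim) (auto intro: Q_lim)
  have ev: "\<forall>\<^sub>F eps in at_right 0. ereal (Pe eps) + ereal (Qe eps) = ereal (trunc_curv K E x eps)"
    unfolding eventually_at_right[OF zero_less_one]
    by (intro exI[of _ 1]) (auto simp: trunc_split)
  have "((\<lambda>eps. ereal (trunc_curv K E x eps)) \<longlongrightarrow> Sup_P + ereal Q0) (at_right 0)"
    using tendsto_cong[OF ev] lim by simp
  then show ?thesis unfolding nonlocal_curv_def by (intro tendsto_Lim) auto
qed

lemma curv_ge: "ereal (Pe (\<rho>/2) + Q0) \<le> nonlocal_curv K E x"
proof -
  have "ereal (Pe (\<rho>/2)) \<le> Sup_P" unfolding Sup_P_def using rho by (intro SUP_upper) auto
  then show ?thesis unfolding curv_eq by (metis add_right_mono plus_ereal.simps(1))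
qed

end


lemma measure_ball_leb: "0 \<le> r \<Longrightarrow> measure lebesgue (ball (c::'a::euclidean_space) r) = unit_ball_vol (real DIM('a)) * r ^ DIM('a)"
  by (simp add: measure_def emeasure_ball)

lemma emeasure_ball_inter_fin:
  "emeasure lebesgue (A \<inter> ball (c::'a::euclidean_space) r) = ennreal (measure lebesgue (A \<inter> ball c r))"
proof -
  have "emeasure lebesgue (A \<inter> ball c r) \<le> emeasure lebesgue (cball c \<bar>r\<bar>)"
    by (intro emeasure_mono) auto
  also have "\<dots> < \<infinity>" by (simp add: emeasure_cball)
  finally have "emeasure lebesgue (A \<inter> ball c r) < \<infinity>" .
  then show ?thesis using emeasure_eq_ennreal_measure[of lebesgue "A \<inter> ball c r"] by (simp add: less_top)
qed

context touch
begin

lemma P1_low: "lam * \<rho> powr (-(real DIM('a) + s)) * (unit_ball_vol (real DIM('a)) * (\<rho>/4)^DIM('a)) \<le> P1 (\<rho>/2)"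
proof -
  let ?c = "lam * \<rho> powr (-(real DIM('a) + s))"
  have Gm: "G \<in> sets lebesgue" unfolding G_def by simp
  have Gf: "emeasure lebesgue G < \<infinity>" unfolding G_def using rho by (simp add: emeasure_ball)
  have iG: "integrable lebesgue (\<lambda>y. ?c * indicator G y)"
    using integrable_real_indicator[OF Gm Gf] by simp
  have i1: "integrable lebesgue (\<lambda>y. indicator (B - ball x (\<rho>/2)) y * F x y)"
    using rho by (intro int_out[of _ "\<rho>/2"]) auto
  have "(\<integral>y. ?c * indicator G y \<partial>lebesgue) = ?c * measure lebesgue G" by simp
  also have "measure lebesgue G = unit_ball_vol (real DIM('a)) * (\<rho>/4)^DIM('a)"
    unfolding G_def using rho by (intro measure_ball_leb) simp
  finally have eq: "(\<integral>y. ?c * indicator G y \<partial>lebesgue) = ?c * (unit_ball_vol (real DIM('a)) * (\<rho>/4)^DIM('a))" .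
  have "(\<integral>y. ?c * indicator G y \<partial>lebesgue) \<le> P1 (\<rho>/2)"
    unfolding P1_def
  proof (rule integral_mono[OF iG i1])
    fix y
    show "?c * indicator G y \<le> indicator (B - ball x (\<rho>/2)) y * F x y"
    proof (cases "y \<in> B - ball x (\<rho>/2)")
      case True
      then have yx: "y \<noteq> x" using rho by auto
      have yE: "y \<notin> E" using True BE unfolding B_def by auto
      have Fy: "F x y = K (x - y)" using yE by (simp add: F_def tchi_def)
      show ?thesis
      proof (cases "y \<in> G")
        case yG: True
        note g = G_props[OF yG]
        have "\<rho> powr (-(real DIM('a) + s)) \<le> ph x y"
          unfolding ph_def using g s rho by (intro powr_mono2') auto
        then have "?c \<le> lam * ph x y" using lam by simp
        also have "\<dots> \<le> K (x - y)" using K_bounds(1)[OF yx] .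
        finally show ?thesis using True yG Fy by simp
      next
        case False
        then show ?thesis using True Fy K_bounds(3)[OF yx] by simp
      qed
    next
      case False
      then have "y \<notin> G" using G_props(1,2)[of y] by (auto simp: dist_norm)
      then show ?thesis using False by simp
    qed
  qed
  then show ?thesis by (simp only: eq)
qed

abbreviation "mm L \<equiv> measure lebesgue (E \<inter> ball x (L*\<rho>))"

lemma P2_low:
  assumes L: "2 \<le> L"
  shows "- Lam * ((\<rho>/2) powr (-(real DIM('a) + s)) * mm L) \<le> P2 (\<rho>/2)"
proof -
  let ?S = "Bp - ball x (\<rho>/2)"
  let ?c = "(\<rho>/2) powr (-(real DIM('a) + s))"
  have Sm: "?S \<in> sets lebesgue" by simp
  have xS: "x \<notin> ?S" using rho by simp
  have fin: "(\<integral>\<^sup>+y. indicator ?S y * ennreal (ph x y) \<partial>lebesgue) < \<infinity>"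
    using rho by (intro fin_out[OF Sm, of "\<rho>/2"]) (auto simp: dist_norm)
  have "(\<integral>\<^sup>+y. indicator (?S \<inter> E) y * ennreal (ph x y) \<partial>lebesgue) \<le> ennreal ?c * emeasure lebesgue (?S \<inter> E)"
  proof (rule nn_const_bound)
    show "?S \<inter> E \<in> sets lebesgue" by simp
    fix y assume "y \<in> ?S \<inter> E"
    then have "\<rho>/2 \<le> norm (x - y)" by (auto simp: dist_norm)
    then show "ennreal (ph x y) \<le> ennreal ?c" unfolding ph_def using rho s
      by (intro ennreal_leI powr_mono2') auto
  qed
  also have "\<dots> \<le> ennreal ?c * emeasure lebesgue (E \<inter> ball x (L*\<rho>))"
  proof (intro mult_left_mono emeasure_mono)
    have "2*\<rho> \<le> L*\<rho>" using L rho by (intro mult_right_mono) auto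
    show "?S \<inter> E \<subseteq> E \<inter> ball x (L*\<rho>)"
    proof
      fix y assume y: "y \<in> ?S \<inter> E"
      then have "y \<in> ball x (2*\<rho>)" using Bp_sub by blast
      moreover have "2*\<rho> \<le> L*\<rho>" using L rho by (intro mult_right_mono) auto
      ultimately have "dist x y < L*\<rho>" by simp
      then show "y \<in> E \<inter> ball x (L*\<rho>)" using y by auto
    qed
  qed auto
  also have "\<dots> = ennreal (?c * mm L)" by (simp add: emeasure_ball_inter_fin ennreal_mult)
  finally have b: "(\<integral>\<^sup>+y. indicator (?S \<inter> E) y * ennreal (ph x y) \<partial>lebesgue) \<le> ennreal (?c * mm L)" .
  show ?thesis unfolding P2_def by (rule integral_F_lower[OF Sm xS fin b]) simp
qed

lemma Q0_low:
  assumes th: "0 < \<theta>" "3*\<theta> \<le> 1" and L: "2 \<le> L"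
  shows "- Lam * (cuspC s DIM('a) * (\<theta>*\<rho>) powr (1 - s) / \<rho> + (\<theta>*\<rho>) powr (-(real DIM('a) + s)) * mm L
            + tailC s DIM('a) * (L*\<rho>) powr (-s)) \<le> Q0"
proof -
  let ?c2 = "(\<theta>*\<rho>) powr (-(real DIM('a) + s))"
  let ?S2 = "E \<inter> ball x (L*\<rho>) \<inter> {y. \<theta>*\<rho> \<le> norm (x - y)}"
  have Dm: "D \<in> sets lebesgue" by simp
  have xD: "x \<notin> D" by (simp add: D_def)
  have fin: "(\<integral>\<^sup>+y. indicator D y * ennreal (ph x y) \<partial>lebesgue) < \<infinity>" by (rule fin_D) auto
  have trho: "0 < \<theta>*\<rho>" "3*(\<theta>*\<rho>) \<le> \<rho>" using th rho by (auto simp: mult_le_cancel_right1)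
  have Lrho: "0 < L*\<rho>" using L rho by simp
  have "(\<integral>\<^sup>+y. indicator (D \<inter> E) y * ennreal (ph x y) \<partial>lebesgue)
     \<le> (\<integral>\<^sup>+y. indicator (cusp (\<theta>*\<rho>)) y * ennreal (ph x y) \<partial>lebesgue)
       + (\<integral>\<^sup>+y. indicator ?S2 y * ennreal (ph x y) \<partial>lebesgue)
       + (\<integral>\<^sup>+y. indicator {y. L*\<rho> \<le> norm (x - y)} y * ennreal (ph x y) \<partial>lebesgue)"
  proof (rule nn_split3)
    show "?S2 \<in> sets lebesgue" by simp
    fix y assume y: "y \<in> D \<inter> E"
    show "y \<in> cusp (\<theta>*\<rho>) \<or> y \<in> ?S2 \<or> y \<in> {y. L*\<rho> \<le> norm (x - y)}"
    proof (cases "norm (y - x) < \<theta>*\<rho>")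
      case True then show ?thesis using D_cusp[of y "\<theta>*\<rho>"] y by auto
    next
      case False then show ?thesis using y by (auto simp: dist_norm norm_minus_commute)
    qed
  qed auto
  also have "\<dots> \<le> ennreal (cuspC s DIM('a) * (\<theta>*\<rho>) powr (1 - s) / \<rho>) + ennreal (?c2 * mm L)
                  + ennreal (tailC s DIM('a) * (L*\<rho>) powr (-s))"
  proof (intro add_mono cusp_ph tail_ph trho Lrho)
    have "(\<integral>\<^sup>+y. indicator ?S2 y * ennreal (ph x y) \<partial>lebesgue) \<le> ennreal ?c2 * emeasure lebesgue ?S2"
    proof (rule nn_const_bound)
      show "?S2 \<in> sets lebesgue" by simp
      fix y assume "y \<in> ?S2"
      then have "\<theta>*\<rho> \<le> norm (x - y)" by auto
      then show "ennreal (ph x y) \<le> ennreal ?c2" unfolding ph_def using trho s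
        by (intro ennreal_leI powr_mono2') auto
    qed
    also have "\<dots> \<le> ennreal ?c2 * emeasure lebesgue (E \<inter> ball x (L*\<rho>))"
      by (intro mult_left_mono emeasure_mono) auto
    also have "\<dots> = ennreal (?c2 * mm L)" by (simp add: emeasure_ball_inter_fin ennreal_mult)
    finally show "(\<integral>\<^sup>+y. indicator ?S2 y * ennreal (ph x y) \<partial>lebesgue) \<le> ennreal (?c2 * mm L)" .
  qed
  also have "\<dots> = ennreal (cuspC s DIM('a) * (\<theta>*\<rho>) powr (1 - s) / \<rho> + ?c2 * mm L + tailC s DIM('a) * (L*\<rho>) powr (-s))"
  proof -
    have "0 \<le> cuspC s DIM('a) * (\<theta>*\<rho>) powr (1 - s) / \<rho>"
      using cuspC_pos[OF s(2), of "DIM('a)"] rho by (intro divide_nonneg_pos mult_nonneg_nonneg) auto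
    moreover have "0 \<le> ?c2 * mm L" by simp
    moreover have "0 \<le> tailC s DIM('a) * (L*\<rho>) powr (-s)" using tailC_pos[OF s(1), of "DIM('a)"] by simp
    ultimately show ?thesis by (simp add: ennreal_plus)
  qed
  finally have b: "(\<integral>\<^sup>+y. indicator (D \<inter> E) y * ennreal (ph x y) \<partial>lebesgue)
     \<le> ennreal (cuspC s DIM('a) * (\<theta>*\<rho>) powr (1 - s) / \<rho> + ?c2 * mm L + tailC s DIM('a) * (L*\<rho>) powr (-s))" .
  have c: "0 \<le> cuspC s DIM('a) * (\<theta>*\<rho>) powr (1 - s) / \<rho> + ?c2 * mm L + tailC s DIM('a) * (L*\<rho>) powr (-s)"
    using cuspC_pos[OF s(2), of "DIM('a)"] tailC_pos[OF s(1), of "DIM('a)"] rho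
    by (intro add_nonneg_nonneg divide_nonneg_pos mult_nonneg_nonneg) auto
  show ?thesis unfolding Q0_def by (rule integral_F_lower[OF Dm xD fin b c])
qed

end


context touch
begin

lemma local_bound:
  assumes th: "0 < \<theta>" "3*\<theta> \<le> 1" and L: "2 \<le> L"
  shows "ereal (\<rho> powr (-s) * (lam * unit_ball_vol (real DIM('a)) / 4^DIM('a) - Lam * cuspC s DIM('a) * \<theta> powr (1 - s)
            - Lam * tailC s DIM('a) * L powr (-s))
          - Lam * \<rho> powr (-(real DIM('a) + s)) * (2 powr (real DIM('a) + s) + \<theta> powr (-(real DIM('a) + s))) * mm L)
         \<le> nonlocal_curv K E x"
proof -
  let ?d = "DIM('a)" let ?p = "real DIM('a) + s" let ?w = "unit_ball_vol (real DIM('a))"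
  let ?A = "\<rho> powr (-s)" let ?Pp = "\<rho> powr (-?p)"
  have i1: "?Pp * (\<rho>/4)^?d = ?A / 4^?d"
  proof -
    have "(\<rho>/4)^?d = \<rho> powr (real ?d) / 4^?d" using rho by (simp add: power_divide powr_realpow)
    moreover have "?Pp * \<rho> powr (real ?d) = ?A" by (simp add: powr_add[symmetric])
    ultimately show ?thesis by (metis times_divide_eq_right)
  qed
  have i2: "(\<rho>/2) powr (-?p) = 2 powr ?p * ?Pp"
  proof -
    have "(\<rho>/2) powr (-?p) = ?Pp / 2 powr (-?p)" using rho by (auto intro: powr_divide)
    also have "(2::real) powr (-?p) = inverse (2 powr ?p)" by (rule powr_minus)
    finally show ?thesis by (simp only: divide_inverse inverse_inverse_eq mult.commute)
  qed
  have i3: "(\<theta>*\<rho>) powr (1 - s) / \<rho> = \<theta> powr (1 - s) * ?A"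
  proof -
    have "(\<theta>*\<rho>) powr (1 - s) = \<theta> powr (1 - s) * \<rho> powr (1 - s)" using th rho by (simp add: powr_mult)
    moreover have "\<rho> powr (1 - s) = \<rho> * ?A" using rho by (simp add: powr_diff powr_minus divide_inverse)
    ultimately show ?thesis using rho by simp
  qed
  have i4: "(\<theta>*\<rho>) powr (-?p) = \<theta> powr (-?p) * ?Pp" using th rho by (simp add: powr_mult)
  have i5: "(L*\<rho>) powr (-s) = L powr (-s) * ?A" using L rho by (simp add: powr_mult)
  have low: "lam * ?Pp * (?w * (\<rho>/4)^?d) - Lam * ((\<rho>/2) powr (-?p) * mm L)
      - Lam * (cuspC s ?d * (\<theta>*\<rho>) powr (1 - s) / \<rho> + (\<theta>*\<rho>) powr (-?p) * mm L + tailC s ?d * (L*\<rho>) powr (-s))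
      \<le> Pe (\<rho>/2) + Q0"
    using P1_low P2_low[OF L] Q0_low[OF th L] unfolding Pe_def by linarith
  have eq: "lam * ?Pp * (?w * (\<rho>/4)^?d) - Lam * ((\<rho>/2) powr (-?p) * mm L)
      - Lam * (cuspC s ?d * (\<theta>*\<rho>) powr (1 - s) / \<rho> + (\<theta>*\<rho>) powr (-?p) * mm L + tailC s ?d * (L*\<rho>) powr (-s))
      = ?A * (lam * ?w / 4^?d - Lam * cuspC s ?d * \<theta> powr (1 - s) - Lam * tailC s ?d * L powr (-s))
          - Lam * ?Pp * (2 powr ?p + \<theta> powr (-?p)) * mm L"
  proof -
    have a: "lam * ?Pp * (?w * (\<rho>/4)^?d) = lam * ?w * (?Pp * (\<rho>/4)^?d)" by (simp add: mult_ac)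
    have b: "cuspC s ?d * (\<theta>*\<rho>) powr (1 - s) / \<rho> = cuspC s ?d * ((\<theta>*\<rho>) powr (1 - s) / \<rho>)" by simp
    show ?thesis unfolding a b i1 i2 i3 i4 i5 by (simp add: algebra_simps)
  qed
  have "ereal (Pe (\<rho>/2) + Q0) \<le> nonlocal_curv K E x" by (rule curv_ge)
  then show ?thesis using low unfolding eq by (meson ereal_less_eq(3) order_trans)
qed

end


lemma countable_cover_sum:
  fixes V W :: "'i \<Rightarrow> 'a set"
  assumes C: "countable C" and Vm: "\<And>i. i \<in> C \<Longrightarrow> V i \<in> sets M" and Wm: "\<And>i. i \<in> C \<Longrightarrow> W i \<in> sets M"
    and dj: "disjoint_family_on W C"
    and le: "\<And>i. i \<in> C \<Longrightarrow> emeasure M (V i) \<le> k * emeasure M (W i)"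
  shows "emeasure M (\<Union>i\<in>C. V i) \<le> k * emeasure M (\<Union>i\<in>C. W i)"
proof (cases "finite C")
  case True
  have "emeasure M (\<Union>i\<in>C. V i) \<le> (\<Sum>i\<in>C. emeasure M (V i))"
    using True Vm by (intro emeasure_subadditive_finite) auto
  also have "\<dots> \<le> (\<Sum>i\<in>C. k * emeasure M (W i))" using le by (intro sum_mono) auto
  also have "\<dots> = k * (\<Sum>i\<in>C. emeasure M (W i))" by (simp add: sum_distrib_left)
  also have "(\<Sum>i\<in>C. emeasure M (W i)) = emeasure M (\<Union>i\<in>C. W i)"
    using True Wm dj by (intro sum_emeasure) auto
  finally show ?thesis .
next
  case False
  define g where "g = from_nat_into C"
  have bij: "bij_betw g UNIV C" unfolding g_def using C False by (rule bij_betw_from_nat_into)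
  then have gC: "g n \<in> C" for n by (auto simp: bij_betw_def)
  have inj: "inj g" using bij by (auto simp: bij_betw_def)
  have CV: "(\<Union>i\<in>C. V i) = (\<Union>n. V (g n))" and CW: "(\<Union>i\<in>C. W i) = (\<Union>n. W (g n))"
    using bij by (auto simp: bij_betw_def)
  have "emeasure M (\<Union>n. V (g n)) \<le> (\<Sum>n. emeasure M (V (g n)))"
    using gC Vm by (intro emeasure_subadditive_countably) auto
  also have "\<dots> \<le> (\<Sum>n. k * emeasure M (W (g n)))" using le gC by (intro suminf_le) auto
  also have "\<dots> = k * (\<Sum>n. emeasure M (W (g n)))" by (rule ennreal_suminf_cmult)
  also have "(\<Sum>n. emeasure M (W (g n))) = emeasure M (\<Union>n. W (g n))"
  proof (rule suminf_emeasure)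
    show "range (\<lambda>n. W (g n)) \<subseteq> sets M" using gC Wm by auto
    show "disjoint_family (\<lambda>n. W (g n))"
      unfolding disjoint_family_on_def
    proof (intro ballI impI)
      fix m n :: nat assume "m \<noteq> n"
      then have "g m \<noteq> g n" using inj by (auto dest: injD)
      then show "W (g m) \<inter> W (g n) = {}" using dj gC unfolding disjoint_family_on_def by auto
    qed
  qed
  finally show ?thesis unfolding CV CW .
qed


lemma min_powr_le:
  fixes X A q :: real assumes "0 < X" "0 < A" "0 < q"
  shows "(min A (X powr (1/q))) powr q \<le> X"
proof -
  have "(min A (X powr (1/q))) powr q \<le> (X powr (1/q)) powr q"
    using assms by (intro powr_mono2) auto
  also have "\<dots> = X" using assms by (simp add: powr_powr)
  finally show ?thesis .
qed

lemma max_powr_le: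
  fixes Y A s :: real assumes "0 < Y" "0 < A" "0 < s"
  shows "(max A (Y powr (1/s))) powr (-s) \<le> 1/Y"
proof -
  have "(max A (Y powr (1/s))) powr (-s) \<le> (Y powr (1/s)) powr (-s)"
    using assms by (intro powr_mono2') auto
  also have "\<dots> = 1/Y" using assms by (simp add: powr_powr powr_minus_divide)
  finally show ?thesis .
qed

lemma alg_M:
  fixes a R \<rho> M s c :: real
  assumes "0 < a" "0 < R" "0 < \<rho>" "\<rho> \<le> a*R" "0 \<le> M" "M * a powr s \<le> c" "0 < s"
  shows "M * R powr (-s) \<le> c * \<rho> powr (-s)"
proof -
  have "R powr (-s) = a powr s * (a*R) powr (-s)"
    using assms by (simp add: powr_mult powr_minus field_simps)
  then have "M * R powr (-s) = (M * a powr s) * (a*R) powr (-s)" by simp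
  also have "\<dots> \<le> c * (a*R) powr (-s)" using assms by (intro mult_right_mono) auto
  also have "\<dots> \<le> c * \<rho> powr (-s)"
  proof (intro mult_left_mono)
    show "(a*R) powr (-s) \<le> \<rho> powr (-s)" using assms by (intro powr_mono2') auto
    show "0 \<le> c" using assms by (meson order_trans mult_nonneg_nonneg powr_ge_zero)
  qed
  finally show ?thesis .
qed

lemma alg_eta:
  fixes \<rho> c LC m s :: real and n :: nat
  assumes "0 < \<rho>" "0 < LC" "c * \<rho> powr (-s) \<le> LC * \<rho> powr (-(real n + s)) * m"
  shows "c / LC * \<rho>^n \<le> m"
proof -
  have e1: "\<rho> powr (-s) * \<rho> powr (real n + s) = \<rho>^n"
    using assms by (simp add: powr_add[symmetric] powr_realpow)
  have e2: "\<rho> powr (-(real n + s)) * \<rho> powr (real n + s) = 1"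
    using assms by (simp add: powr_add[symmetric])
  have "c * \<rho> powr (-s) * \<rho> powr (real n + s) \<le> LC * \<rho> powr (-(real n + s)) * m * \<rho> powr (real n + s)"
    using assms by (intro mult_right_mono) auto
  then have "c * \<rho>^n \<le> LC * m"
    using e1 e2 by (simp add: mult.assoc) (metis mult.left_commute mult.right_neutral)
  then show ?thesis using assms by (simp add: field_simps)
qed

lemma touching:
  fixes E :: "'a::euclidean_space set" and z :: 'a
  assumes E0: "0 \<in> closure E" and zE: "z \<notin> closure E"
  obtains x \<rho> where "0 < \<rho>" "dist z x = \<rho>" "\<rho> \<le> norm z" "ball z \<rho> \<inter> E = {}"
    "x \<in> frontier E" "ext_touching_ball E x"
proof -
  obtain x where x: "x \<in> closure E" "\<And>y. y \<in> closure E \<Longrightarrow> dist z x \<le> dist z y"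
  proof -
    have "closure E \<noteq> {}" using E0 by auto
    then show ?thesis using distance_attains_inf[of "closure E" z] that by blast
  qed
  define \<rho> where "\<rho> = dist z x"
  have rho: "0 < \<rho>" unfolding \<rho>_def using x(1) zE by auto
  have rz: "\<rho> \<le> norm z" unfolding \<rho>_def using x(2)[OF E0] by (simp add: dist_norm)
  have BE: "ball z \<rho> \<inter> E = {}"
  proof (rule ccontr)
    assume "ball z \<rho> \<inter> E \<noteq> {}"
    then obtain y where "y \<in> E" "dist z y < \<rho>" by auto
    then show False using x(2)[of y] closure_subset[of E] unfolding \<rho>_def by auto
  qed
  have "x \<in> cball z \<rho>" unfolding \<rho>_def by simp
  then have "x \<in> closure (ball z \<rho>)" using rho by (simp add: closure_ball)
  moreover have "closure (ball z \<rho>) \<subseteq> closure (- E)" using BE by (intro closure_mono) auto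
  ultimately have "x \<notin> interior E" by (auto simp: closure_complement)
  then have xf: "x \<in> frontier E" using x(1) by (simp add: frontier_def)
  have "ext_touching_ball E x"
    unfolding ext_touching_ball_def
  proof (intro exI[of _ z] exI[of _ \<rho>] conjI)
    show "0 < \<rho>" by (rule rho)
    show "ball z \<rho> \<subseteq> UNIV - E" using BE by auto
    show "x \<in> frontier (ball z \<rho>)" using rho unfolding \<rho>_def by (simp add: frontier_ball)
  qed
  then show ?thesis using that[OF rho _ rz BE xf] unfolding \<rho>_def by simp
qed


context kset
begin

lemma key_point:
  assumes R: "0 < R" and E0: "0 \<in> frontier E" and visc: "visc_curv_le K E (ball 0 (R/2)) (M * R powr (-s))"
   and M: "0 \<le> M" and th: "0 < \<theta>" "3*\<theta> \<le> 1" "Lam * cuspC s DIM('a) * \<theta> powr (1-s) \<le> c0/4"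
   and L: "2 \<le> L" "Lam * tailC s DIM('a) * L powr (-s) \<le> c0/4"
   and c0: "c0 = lam * unit_ball_vol (real DIM('a)) / 4^DIM('a)"
   and a: "0 < a" "(L+2)*a \<le> 1" "M * a powr s \<le> c0/4"
   and z: "z \<in> ball 0 (a*R)" "z \<notin> closure E"
  shows "\<exists>\<rho>>0. \<rho> < a*R \<and> ball z ((L+1)*\<rho>) \<subseteq> ball 0 R
           \<and> c0/(4*(Lam*(2 powr (real DIM('a) + s) + \<theta> powr (-(real DIM('a) + s))))) * \<rho>^DIM('a)
              \<le> measure lebesgue (E \<inter> ball z ((L+1)*\<rho>))"
proof -
  let ?p = "real DIM('a) + s"
  define Cth where "Cth = 2 powr ?p + \<theta> powr (-?p)"
  have Cth: "0 < Cth" unfolding Cth_def by (simp add: add_pos_nonneg)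
  have E0': "0 \<in> closure E" using E0 by (simp add: frontier_def)
  obtain x \<rho> where xr: "0 < \<rho>" "dist z x = \<rho>" "\<rho> \<le> norm z" "ball z \<rho> \<inter> E = {}"
    "x \<in> frontier E" "ext_touching_ball E x"
    using touching[OF E0' z(2)] by blast
  have nz: "norm z < a*R" using z(1) by simp
  have rl: "\<rho> < a*R" using xr(3) nz by simp
  interpret T: touch K E lam Lam s x z \<rho>
    by unfold_locales (use xr in auto)
  have a4: "a \<le> 1/4"
  proof -
    have "4*a \<le> (L+2)*a" using L a by (intro mult_right_mono) auto
    then have "4*a \<le> 1" using a(2) by linarith
    then show ?thesis by simp
  qed
  have "norm x \<le> norm z + dist z x"
    using norm_triangle_ineq[of z "x - z"] by (simp add: dist_norm norm_minus_commute)
  moreover have "a*R \<le> R/4" using mult_right_mono[OF a4, of R] R by simp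
  ultimately have "norm x < R/2" using xr(2,3) nz by linarith
  then have xin: "x \<in> frontier E \<inter> ball 0 (R/2)" using xr(5) by simp
  have up: "nonlocal_curv K E x \<le> ereal (M * R powr (-s))"
    using visc xin xr(6) unfolding visc_curv_le_def by blast
  have low: "ereal (\<rho> powr (-s) * (lam * unit_ball_vol (real DIM('a)) / 4^DIM('a) - Lam * cuspC s DIM('a) * \<theta> powr (1 - s)
            - Lam * tailC s DIM('a) * L powr (-s))
          - Lam * \<rho> powr (-?p) * (2 powr ?p + \<theta> powr (-?p)) * T.mm L) \<le> nonlocal_curv K E x"
    by (rule T.local_bound[OF th(1,2) L(1)])
  have ineq: "\<rho> powr (-s) * (c0 - Lam * cuspC s DIM('a) * \<theta> powr (1 - s) - Lam * tailC s DIM('a) * L powr (-s))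
          - Lam * \<rho> powr (-?p) * Cth * T.mm L \<le> M * R powr (-s)"
    using order_trans[OF low up] unfolding c0 Cth_def by simp
  have "\<rho> powr (-s) * (c0/2) \<le> \<rho> powr (-s) * (c0 - Lam * cuspC s DIM('a) * \<theta> powr (1 - s) - Lam * tailC s DIM('a) * L powr (-s))"
    using th(3) L(2) by (intro mult_left_mono) auto
  moreover have "M * R powr (-s) \<le> (c0/4) * \<rho> powr (-s)"
    by (rule alg_M[OF a(1) R xr(1) less_imp_le[OF rl] M a(3) s(1)])
  ultimately have "(c0/4) * \<rho> powr (-s) \<le> (Lam * Cth) * \<rho> powr (-?p) * T.mm L"
    using ineq by (simp add: algebra_simps)
  then have m1: "(c0/4) / (Lam * Cth) * \<rho>^DIM('a) \<le> T.mm L"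
    using alg_eta[of \<rho> "Lam * Cth" "c0/4" s "DIM('a)"] xr(1) Cth lam by simp
  have "T.mm L \<le> measure lebesgue (E \<inter> ball z ((L+1)*\<rho>))"
  proof -
    have "ball x (L*\<rho>) \<subseteq> ball z ((L+1)*\<rho>)"
    proof
      fix y assume "y \<in> ball x (L*\<rho>)"
      then have "dist x y < L*\<rho>" by simp
      moreover have "dist z y \<le> dist z x + dist x y" by (rule dist_triangle)
      ultimately show "y \<in> ball z ((L+1)*\<rho>)" using xr(2) by (simp add: algebra_simps)
    qed
    then have "emeasure lebesgue (E \<inter> ball x (L*\<rho>)) \<le> emeasure lebesgue (E \<inter> ball z ((L+1)*\<rho>))"
      by (intro emeasure_mono) auto
    then show ?thesis by (simp add: emeasure_ball_inter_fin)
  qed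
  moreover have "ball z ((L+1)*\<rho>) \<subseteq> ball 0 R"
  proof
    fix y assume "y \<in> ball z ((L+1)*\<rho>)"
    then have "dist z y < (L+1)*\<rho>" by simp
    moreover have "norm y \<le> norm z + dist z y"
      using norm_triangle_ineq[of z "y - z"] by (simp add: dist_norm norm_minus_commute)
    moreover have "(L+1)*\<rho> \<le> (L+1)*(a*R)" using rl L by (intro mult_left_mono) auto
    moreover have "a*R + (L+1)*(a*R) \<le> R"
    proof -
      have "a*R + (L+1)*(a*R) = ((L+2)*a)*R" by (simp add: algebra_simps)
      also have "\<dots> \<le> 1*R" using a(2) R by (intro mult_right_mono) auto
      finally show ?thesis by simp
    qed
    ultimately have "norm y < R" using nz by linarith
    then show "y \<in> ball 0 R" by simp
  qed
  ultimately show ?thesis using xr(1) rl m1 unfolding Cth_def by (intro exI[of _ \<rho>]) (auto simp: field_simps)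
qed

end


theorem theorem1p2:
  fixes s lam Lam M :: real
  assumes "0 < s" "s < 1" "0 < lam" "lam \<le> Lam" "0 \<le> M"
  shows "\<exists>\<delta>>0. \<forall>(R::real) (K::'a::euclidean_space \<Rightarrow> real) (E::'a set).
     R > 0
     \<and> K \<in> borel_measurable lebesgue
     \<and> (\<forall>y. y \<noteq> 0 \<longrightarrow> lam * norm y powr (- (real DIM('a) + s)) \<le> K y
                      \<and> K y \<le> Lam * norm y powr (- (real DIM('a) + s))
                      \<and> K y = K (- y))
     \<and> E \<in> sets borel
     \<and> frontier E \<in> null_sets lebesgue
     \<and> 0 \<in> frontier E
     \<and> visc_curv_le K E (ball 0 (R / 2)) (M * R powr (- s))
     \<longrightarrow> measure lebesgue (E \<inter> ball 0 R) \<ge> \<delta> * measure lebesgue (ball (0::'a) R)"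
proof -
  note s = assms(1,2) and lam = assms(3,4) and M = assms(5)
  let ?d = "DIM('a)" let ?p = "real DIM('a) + s"
  define w where "w = unit_ball_vol (real ?d)"
  define c0 where "c0 = lam * w / 4^?d"
  define Cc where "Cc = cuspC s ?d"
  define Tc where "Tc = tailC s ?d"
  define \<theta> where "\<theta> = min (1/3) ((c0/(4*Lam*Cc)) powr (1/(1-s)))"
  define L where "L = max 2 ((4*Lam*Tc/c0) powr (1/s))"
  define Cth where "Cth = 2 powr ?p + \<theta> powr (-?p)"
  define \<eta> where "\<eta> = c0/(4*(Lam*Cth))"
  define a where "a = min (1/(L+2)) ((c0/(4*M+1)) powr (1/s))"
  define \<kappa> where "\<kappa> = 5^?d * (L+1)^?d * w / \<eta>"
  define \<delta> where "\<delta> = a^?d / (\<kappa> + 1)"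
  have w: "0 < w" unfolding w_def by simp
  have Lam: "0 < Lam" using lam by simp
  have c0: "0 < c0" unfolding c0_def using w lam by simp
  have Cc: "0 < Cc" unfolding Cc_def using cuspC_pos s by simp
  have Tc: "0 < Tc" unfolding Tc_def using tailC_pos s by simp
  have th: "0 < \<theta>" "3*\<theta> \<le> 1" unfolding \<theta>_def using c0 Lam Cc by auto
  have th3: "Lam * Cc * \<theta> powr (1-s) \<le> c0/4"
  proof -
    have "\<theta> powr (1-s) \<le> c0/(4*Lam*Cc)" unfolding \<theta>_def
      using min_powr_le[of "c0/(4*Lam*Cc)" "1/3" "1-s"] c0 Lam Cc s by auto
    then have "Lam * Cc * \<theta> powr (1-s) \<le> Lam * Cc * (c0/(4*Lam*Cc))"
      using Lam Cc by (intro mult_left_mono) auto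
    also have "\<dots> = c0/4" using Lam Cc by (simp add: field_simps)
    finally show ?thesis .
  qed
  have L1: "2 \<le> L" unfolding L_def by simp
  have L2: "Lam * Tc * L powr (-s) \<le> c0/4"
  proof -
    have "L powr (-s) \<le> 1/(4*Lam*Tc/c0)" unfolding L_def
      using max_powr_le[of "4*Lam*Tc/c0" 2 s] c0 Lam Tc s by auto
    then have "Lam * Tc * L powr (-s) \<le> Lam * Tc * (1/(4*Lam*Tc/c0))"
      using Lam Tc by (intro mult_left_mono) auto
    also have "\<dots> = c0/4" using Lam Tc c0 by (simp add: field_simps)
    finally show ?thesis .
  qed
  have Cth: "0 < Cth" unfolding Cth_def by (simp add: add_pos_nonneg)
  have eta: "0 < \<eta>" unfolding \<eta>_def using c0 Lam Cth by simp
  have a: "0 < a" "(L+2)*a \<le> 1" "M * a powr s \<le> c0/4"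
  proof -
    show "0 < a" unfolding a_def using L1 c0 M by auto
    have "a \<le> 1/(L+2)" unfolding a_def by simp
    then show "(L+2)*a \<le> 1" using L1 by (simp add: field_simps)
    have "a powr s \<le> c0/(4*M+1)" unfolding a_def
      using min_powr_le[of "c0/(4*M+1)" "1/(L+2)" s] c0 M s L1 by auto
    then have "M * a powr s \<le> M * (c0/(4*M+1))" using M by (intro mult_left_mono) auto
    also have "\<dots> \<le> c0/4" using M c0 by (simp add: field_simps)
    finally show "M * a powr s \<le> c0/4" .
  qed
  have kappa: "0 < \<kappa>" unfolding \<kappa>_def using w eta L1 by simp
  show ?thesis
  proof (intro exI[of _ \<delta>] conjI allI impI)
    show "0 < \<delta>" unfolding \<delta>_def using a kappa by simp
    fix R :: real and K :: "'a \<Rightarrow> real" and E :: "'a set"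
    assume H: "R > 0
     \<and> K \<in> borel_measurable lebesgue
     \<and> (\<forall>y. y \<noteq> 0 \<longrightarrow> lam * norm y powr (- (real DIM('a) + s)) \<le> K y
                      \<and> K y \<le> Lam * norm y powr (- (real DIM('a) + s))
                      \<and> K y = K (- y))
     \<and> E \<in> sets borel
     \<and> frontier E \<in> null_sets lebesgue
     \<and> 0 \<in> frontier E
     \<and> visc_curv_le K E (ball 0 (R / 2)) (M * R powr (- s))"
    then have R: "0 < R" and Km: "K \<in> borel_measurable lebesgue"
      and Kb: "\<forall>y. y \<noteq> 0 \<longrightarrow> lam * norm y powr (- (real DIM('a) + s)) \<le> K y
                      \<and> K y \<le> Lam * norm y powr (- (real DIM('a) + s)) \<and> K y = K (- y)"
      and Eb: "E \<in> sets borel" and fr: "frontier E \<in> null_sets lebesgue" and E0: "0 \<in> frontier E"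
      and visc: "visc_curv_le K E (ball 0 (R / 2)) (M * R powr (- s))" by blast+
    have Kb': "\<And>y. y \<noteq> 0 \<Longrightarrow> lam * norm y powr (- (real DIM('a) + s)) \<le> K y
                      \<and> K y \<le> Lam * norm y powr (- (real DIM('a) + s)) \<and> K y = K (- y)"
      using Kb by blast
    interpret kset K E lam Lam s
      by (rule kset.intro[OF s lam Km Kb' Eb])
    define U where "U = ball 0 (a*R) - closure E"
    have kp: "\<forall>z\<in>U. \<exists>\<rho>>0. \<rho> < a*R \<and> ball z ((L+1)*\<rho>) \<subseteq> ball 0 R
           \<and> \<eta> * \<rho>^?d \<le> measure lebesgue (E \<inter> ball z ((L+1)*\<rho>))"
    proof
      fix z assume "z \<in> U"
      then have z: "z \<in> ball 0 (a*R)" "z \<notin> closure E" unfolding U_def by auto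
      show "\<exists>\<rho>>0. \<rho> < a*R \<and> ball z ((L+1)*\<rho>) \<subseteq> ball 0 R
           \<and> \<eta> * \<rho>^?d \<le> measure lebesgue (E \<inter> ball z ((L+1)*\<rho>))"
        using key_point[OF R E0 visc M th th3[unfolded Cc_def] L1 L2[unfolded Tc_def] c0_def[unfolded w_def] a z]
        unfolding \<eta>_def Cth_def by simp
    qed
    then obtain rf where rf: "\<And>z. z \<in> U \<Longrightarrow> 0 < rf z \<and> rf z < a*R \<and> ball z ((L+1)*rf z) \<subseteq> ball 0 R
           \<and> \<eta> * (rf z)^?d \<le> measure lebesgue (E \<inter> ball z ((L+1)*rf z))"
      by metis
    define r where "r z = (L+1) * rf z" for z
    have cov: "U \<subseteq> (\<Union>z\<in>U. ball z (r z))"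
    proof
      fix z assume "z \<in> U"
      then have "0 < r z" unfolding r_def using rf L1 by (simp add: add_pos_pos)
      then have "z \<in> ball z (r z)" by simp
      then show "z \<in> (\<Union>z\<in>U. ball z (r z))" using \<open>z \<in> U\<close> by blast
    qed
    have rb: "\<And>z. z \<in> U \<Longrightarrow> 0 < r z \<and> r z \<le> (L+1)*(a*R)"
      unfolding r_def using rf L1 by (auto intro: mult_left_mono less_imp_le)
    obtain C where C: "countable C" "C \<subseteq> U"
      "pairwise (\<lambda>i j. disjnt (ball i (r i)) (ball j (r j))) C"
      "U \<subseteq> (\<Union>i\<in>C. ball i (5 * r i))"
      using Vitali_covering_lemma_balls[OF cov rb] by blast
    have step1: "emeasure lebesgue (\<Union>i\<in>C. ball i (5 * r i)) \<le> ennreal \<kappa> * emeasure lebesgue (\<Union>i\<in>C. E \<inter> ball i (r i))"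
    proof (rule countable_cover_sum[OF C(1)])
      show "disjoint_family_on (\<lambda>i. E \<inter> ball i (r i)) C"
        using C(3) unfolding disjoint_family_on_def pairwise_def disjnt_def by blast
      fix i assume iC: "i \<in> C"
      then have iU: "i \<in> U" using C(2) by auto
      show "ball i (5 * r i) \<in> sets lebesgue" "E \<inter> ball i (r i) \<in> sets lebesgue" by auto
      have ri: "0 < rf i" using rf[OF iU] by simp
      have e1: "emeasure lebesgue (ball i (5 * r i)) = ennreal (w * (5 * r i)^?d)"
        using rb[OF iU] unfolding w_def by (simp add: emeasure_ball)
      have "w * (5 * r i)^?d = \<kappa> * (\<eta> * (rf i)^?d)"
      proof -
        have p: "(5 * r i)^?d = 5^?d * (L+1)^?d * (rf i)^?d" unfolding r_def by (simp add: power_mult_distrib)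
        show ?thesis unfolding p \<kappa>_def using eta by (simp add: field_simps)
      qed
      also have "\<dots> \<le> \<kappa> * measure lebesgue (E \<inter> ball i (r i))"
        using rf[OF iU] kappa unfolding r_def by (intro mult_left_mono) auto
      finally have r1: "w * (5 * r i)^?d \<le> \<kappa> * measure lebesgue (E \<inter> ball i (r i))" .
      have e2: "ennreal (\<kappa> * measure lebesgue (E \<inter> ball i (r i))) = ennreal \<kappa> * emeasure lebesgue (E \<inter> ball i (r i))"
        using kappa by (simp add: emeasure_ball_inter_fin ennreal_mult)
      show "emeasure lebesgue (ball i (5 * r i)) \<le> ennreal \<kappa> * emeasure lebesgue (E \<inter> ball i (r i))"
        unfolding e1 e2[symmetric] using r1 by (rule ennreal_leI)
    qed
    have Uin: "emeasure lebesgue U \<le> emeasure lebesgue (\<Union>i\<in>C. ball i (5 * r i))"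
      using C(4) by (intro emeasure_mono) (auto intro!: borel_sets_leb borel_open)
    have Win: "emeasure lebesgue (\<Union>i\<in>C. E \<inter> ball i (r i)) \<le> emeasure lebesgue (E \<inter> ball 0 R)"
    proof (intro emeasure_mono)
      show "(\<Union>i\<in>C. E \<inter> ball i (r i)) \<subseteq> E \<inter> ball 0 R"
        using C(2) rf unfolding r_def by blast
    qed auto
    have Um: "U \<in> sets lebesgue" unfolding U_def by (intro borel_sets_leb) auto
    have frm: "frontier E \<in> sets lebesgue" by (intro borel_sets_leb) auto
    have aR: "a*R \<le> R"
    proof -
      have "1*a \<le> (L+2)*a" using a(1) L1 by (intro mult_right_mono) auto
      then have "a \<le> 1" using a(2) by linarith
      then show ?thesis using R by simp
    qed
    have ballsub: "ball 0 (a*R) \<subseteq> (U \<union> (E \<inter> ball 0 R)) \<union> frontier E"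
    proof
      fix y assume y: "y \<in> ball (0::'a) (a*R)"
      then have yR: "y \<in> ball 0 R" using aR by auto
      show "y \<in> (U \<union> (E \<inter> ball 0 R)) \<union> frontier E"
      proof (cases "y \<in> closure E")
        case True
        then show ?thesis using yR by (cases "y \<in> E") (auto simp: frontier_def dest: interior_subset[THEN subsetD])
      next
        case False then show ?thesis using y unfolding U_def by auto
      qed
    qed
    have "emeasure lebesgue (ball (0::'a) (a*R)) \<le> emeasure lebesgue ((U \<union> (E \<inter> ball 0 R)) \<union> frontier E)"
    proof -
      have EBm: "E \<inter> ball 0 R \<in> sets lebesgue" by (intro sets.Int Em borel_sets_leb) auto
      show ?thesis by (intro emeasure_mono ballsub sets.Un Um EBm frm)
    qed
    also have "\<dots> \<le> emeasure lebesgue (U \<union> (E \<inter> ball 0 R)) + emeasure lebesgue (frontier E)"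
    proof -
      have EBm: "E \<inter> ball 0 R \<in> sets lebesgue" by (intro sets.Int Em borel_sets_leb) auto
      show ?thesis by (intro emeasure_subadditive sets.Un Um EBm frm)
    qed
    also have "emeasure lebesgue (frontier E) = 0" using fr by auto
    also have "emeasure lebesgue (U \<union> (E \<inter> ball 0 R)) \<le> emeasure lebesgue U + emeasure lebesgue (E \<inter> ball 0 R)"
    proof -
      have EBm: "E \<inter> ball 0 R \<in> sets lebesgue" by (intro sets.Int Em borel_sets_leb) auto
      show ?thesis by (intro emeasure_subadditive Um EBm)
    qed
    also have "emeasure lebesgue U \<le> ennreal \<kappa> * emeasure lebesgue (E \<inter> ball 0 R)"
      using Uin step1 Win by (meson order_trans mult_left_mono zero_le)
    finally have main: "emeasure lebesgue (ball (0::'a) (a*R)) \<le> ennreal \<kappa> * emeasure lebesgue (E \<inter> ball 0 R) + emeasure lebesgue (E \<inter> ball 0 R)"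
      by (simp add: add_right_mono)
    define mR where "mR = measure lebesgue (E \<inter> ball (0::'a) R)"
    have mR: "0 \<le> mR" unfolding mR_def by simp
    have b1: "emeasure lebesgue (ball (0::'a) (a*R)) = ennreal (w * (a*R)^?d)"
      using a(1) R unfolding w_def by (simp add: emeasure_ball)
    have b2: "emeasure lebesgue (E \<inter> ball 0 R) = ennreal mR"
      unfolding mR_def by (rule emeasure_ball_inter_fin)
    have b3: "ennreal \<kappa> * ennreal mR + ennreal mR = ennreal ((\<kappa> + 1) * mR)"
    proof -
      have "ennreal ((\<kappa> + 1) * mR) = ennreal (\<kappa> * mR + mR)" by (simp add: distrib_right)
      also have "\<dots> = ennreal (\<kappa> * mR) + ennreal mR" using kappa mR by (intro ennreal_plus) auto
      also have "ennreal (\<kappa> * mR) = ennreal \<kappa> * ennreal mR" using kappa mR by (intro ennreal_mult) auto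
      finally show ?thesis by simp
    qed
    have "ennreal (w * (a*R)^?d) \<le> ennreal ((\<kappa> + 1) * mR)"
      using main unfolding b1 b2 b3 .
    then have "w * (a*R)^?d \<le> (\<kappa> + 1) * mR" using kappa mR by (simp add: ennreal_le_iff)
    moreover have "(a*R)^?d = a^?d * R^?d" by (simp add: power_mult_distrib)
    ultimately have "(a^?d * (w * R^?d)) \<le> (\<kappa> + 1) * mR" by (simp add: mult_ac)
    then have "a^?d * (w * R^?d) / (\<kappa> + 1) \<le> mR" using kappa by (simp add: divide_le_eq mult.commute)
    then have "a^?d / (\<kappa> + 1) * (w * R^?d) \<le> mR" by (simp add: mult.commute times_divide_eq_left)
    moreover have "measure lebesgue (ball (0::'a) R) = w * R^?d" unfolding w_def using R by (intro measure_ball_leb) simp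
    ultimately show "\<delta> * measure lebesgue (ball (0::'a) R) \<le> measure lebesgue (E \<inter> ball 0 R)"
      unfolding \<delta>_def mR_def by simp
  qed
qed


end
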